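(* Let $\mathbb F_\theta^+$ be a single-vertex $k$-graph and $G$ a group, with maps $G\times\mathbb F_\theta^+\to\mathbb F_\theta^+$, $(g,\mu)\mapsto g\cdot\mu$ and $G\times\mathbb F_\theta^+\to G$, $(g,\mu)\mapsto g|_\mu$ satisfying (B1)–(B8). Suppose that for every $\mu\in\mathbb F_\theta^+$ and $h\in G$ there is $g\in G$ with $g|_\mu=h$. Then $\mathcal Q(\mathbb F_\theta^+\bowtie G)$ is isomorphic to the universal C*-algebra $\mathcal A$ generated by a unitary representation $u$ of $G$ and a $*$-representation $v$ of $\mathbb F_\theta^+$ satisfying $u_gv_\mu=v_{g\cdot\mu}u_{g|_\mu}$ for all $\mu\in\mathbb F_\theta^+$, $g\in G$; the isomorphism sends the generating isometry of $(\mu,1_G)$ to $v_\mu$ and that of $(1,g)$ to $u_g$.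
   Context: Single-vertex $k$-graph ($1\le k\le\infty$): a monoid $\mathbb F_\theta^+$ generated by $x^i_{\mathfrak s}$ ($1\le i\le k$, $\mathfrak s\in[m_i]=\{0,\dots,m_i-1\}$) subject to $x^i_{\mathfrak s}x^j_{\mathfrak t}=x^j_{\mathfrak t'}x^i_{\mathfrak s'}$ whenever $\theta_{ij}(\mathfrak s,\mathfrak t)=(\mathfrak t',\mathfrak s')$ ($i<j$, $\theta_{ij}$ bijections $[m_i]\times[m_j]\to[m_j]\times[m_i]$), having unique factorization with respect to the degree map $d(x^i_{\mathfrak s})=e_i\in\mathbb N^k$. A $*$-representation of $\mathbb F_\theta^+$ is a monoid homomorphism $v$ into isometries of a C*-algebra with $\sum_{\mathfrak s\in[m_i]}v_{x^i_{\mathfrak s}}v_{x^i_{\mathfrak s}}^*=1$ for each $i$. Zappa–Szép product: for monoids $U,A$ with maps $a\cdot u\in U$, $a|_u\in A$ satisfying (B1) $1_A\cdot u=u$; (B2) $(ab)\cdot u=a\cdot(b\cdot u)$; (B3) $a\cdot1_U=1_U$; (B4) $a\cdot(uv)=(a\cdot u)(a|_u\cdot v)$; (B5) $a|_{1_U}=a$; (B6) $a|_{uv}=(a|_u)|_v$; (B7) $1_A|_u=1_A$; (B8) $(ab)|_u=a|_{b\cdot u}b|_u$, $U\bowtie A$ is $U\times A$ with $(u,a)(v,b)=(u(a\cdot v),a|_vb)$. Boundary quotient of a left cancellative monoid $P$: with $\mathcal J(P)=\{\varnothing\}\cup\{p_1^{-1}q_1\cdots p_n^{-1}q_nP\}$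 ($pX=\{px\}$, $p^{-1}X=\{y:py\in X\}$) and foundation sets being finite $F\subseteq\mathcal J(P)$ such that every $Y\in\mathcal J(P)$ meets some $X\in F$, $\mathcal Q(P)$ is the universal C*-algebra generated by isometries $v_p$ ($p\in P$) and projections $e_X$ ($X\in\mathcal J(P)$) with $v_pv_q=v_{pq}$, $v_pe_Xv_p^*=e_{pX}$, $e_\varnothing=0$, $e_P=1$, $e_Xe_Y=e_{X\cap Y}$, and $\prod_{X\in F}(1-e_X)=0$ for all foundation sets $F$. *)

theory Defs
  imports "HOL-Analysis.Analysis"
begin

class cstar_algebra = real_normed_algebra_1 + banach +
  fixes scaleC :: "complex \<Rightarrow> 'a \<Rightarrow> 'a"
    and cstar :: "'a \<Rightarrow> 'a"
  assumes scaleC_add_right: "scaleC a (x + y) = scaleC a x + scaleC a y"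
    and scaleC_add_left: "scaleC (a + b) x = scaleC a x + scaleC b x"
    and scaleC_scaleC: "scaleC a (scaleC b x) = scaleC (a * b) x"
    and scaleC_one: "scaleC 1 x = x"
    and scaleR_scaleC: "scaleR r x = scaleC (complex_of_real r) x"
    and norm_scaleC: "norm (scaleC a x) = cmod a * norm x"
    and mult_scaleC_left: "scaleC a x * y = scaleC a (x * y)"
    and mult_scaleC_right: "x * scaleC a y = scaleC a (x * y)"
    and cstar_cstar: "cstar (cstar x) = x"
    and cstar_add: "cstar (x + y) = cstar x + cstar y"
    and cstar_mult: "cstar (x * y) = cstar y * cstar x"
    and cstar_scaleC: "cstar (scaleC a x) = scaleC (cnj a) (cstar x)"
    and cstar_identity: "norm (cstar x * x) = norm x * norm x"

definition isometry :: "'b::cstar_algebra \<Rightarrow> bool" where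
  "isometry x \<longleftrightarrow> cstar x * x = 1"

definition unitary :: "'b::cstar_algebra \<Rightarrow> bool" where
  "unitary x \<longleftrightarrow> cstar x * x = 1 \<and> x * cstar x = 1"

definition projection :: "'b::cstar_algebra \<Rightarrow> bool" where
  "projection x \<longleftrightarrow> cstar x = x \<and> x * x = x"

text \<open>The standard basis vector e_i of N^k (degrees are functions nat => nat).\<close>
definition ebasis :: "nat \<Rightarrow> nat \<Rightarrow> nat" where
  "ebasis i = (\<lambda>j. if j = i then 1 else 0)"

text \<open>A single-vertex k-graph (1 <= k <= infinity): the monoid (the whole type 'p)
with a degree map d into N^k (colours indexed by K = {1..k}, or K = {1..} for
k = infinity; elements of N^infinity are finitely supported), which is a monoid
homomorphism with the unique factorization property, and with finitely many,
but at least one, edges x^i_s of each degree e_i.\<close>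
definition single_vertex_kgraph :: "nat set \<Rightarrow> ('p::monoid_mult \<Rightarrow> nat \<Rightarrow> nat) \<Rightarrow> bool" where
  "single_vertex_kgraph K d \<longleftrightarrow>
     ((\<exists>k\<ge>1. K = {1..k}) \<or> K = {1..}) \<and>
     d 1 = (\<lambda>_. 0) \<and>
     (\<forall>a b. d (a * b) = (\<lambda>j. d a j + d b j)) \<and>
     (\<forall>a. finite {i. d a i \<noteq> 0} \<and> (\<forall>i. i \<notin> K \<longrightarrow> d a i = 0)) \<and>
     (\<forall>\<mu> m n. d \<mu> = (\<lambda>j. m j + n j) \<longrightarrow>
        (\<exists>!ab. d (fst ab) = m \<and> d (snd ab) = n \<and> \<mu> = fst ab * snd ab)) \<and>
     (\<forall>i\<in>K. finite {\<mu>. d \<mu> = ebasis i} \<and> {\<mu>. d \<mu> = ebasis i} \<noteq> {})"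

text \<open>The group G is the type 'g of class group_add (written additively:
identity 0, product g + h); U = the k-graph monoid 'p.\<close>
definition zappa_szep :: "('g::group_add \<Rightarrow> 'p::monoid_mult \<Rightarrow> 'p) \<Rightarrow> ('g \<Rightarrow> 'p \<Rightarrow> 'g) \<Rightarrow> bool" where
  "zappa_szep act restr \<longleftrightarrow>
     (\<forall>u. act 0 u = u) \<and>
     (\<forall>a b u. act (a + b) u = act a (act b u)) \<and>
     (\<forall>a. act a 1 = 1) \<and>
     (\<forall>a u v. act a (u * v) = act a u * act (restr a u) v) \<and>
     (\<forall>a. restr a 1 = a) \<and>
     (\<forall>a u v. restr a (u * v) = restr (restr a u) v) \<and>
     (\<forall>u. restr 0 u = 0) \<and>
     (\<forall>a b u. restr (a + b) u = restr a (act b u) + restr b u)"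

definition zs_mult :: "('g::group_add \<Rightarrow> 'p::monoid_mult \<Rightarrow> 'p) \<Rightarrow> ('g \<Rightarrow> 'p \<Rightarrow> 'g)
    \<Rightarrow> 'p \<times> 'g \<Rightarrow> 'p \<times> 'g \<Rightarrow> 'p \<times> 'g" where
  "zs_mult act restr x y = (fst x * act (snd x) (fst y), restr (snd x) (fst y) + snd y)"

text \<open>For a monoid on the whole type 'a with multiplication m:
cword m [(p1,q1),...,(pn,qn)] = p1^-1 q1 ... pn^-1 qn P.\<close>
fun cword :: "('a \<Rightarrow> 'a \<Rightarrow> 'a) \<Rightarrow> ('a \<times> 'a) list \<Rightarrow> 'a set" where
  "cword m [] = UNIV"
| "cword m (pq # ps) = {y. m (fst pq) y \<in> (m (snd pq)) ` cword m ps}"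

definition constructible :: "('a \<Rightarrow> 'a \<Rightarrow> 'a) \<Rightarrow> 'a set set" where
  "constructible m = insert {} {cword m ps | ps. ps \<noteq> []}"

definition foundation_set :: "('a \<Rightarrow> 'a \<Rightarrow> 'a) \<Rightarrow> 'a set set \<Rightarrow> bool" where
  "foundation_set m F \<longleftrightarrow> finite F \<and> F \<subseteq> constructible m \<and>
     (\<forall>Y\<in>constructible m. Y \<noteq> {} \<longrightarrow> (\<exists>X\<in>F. X \<inter> Y \<noteq> {}))"

text \<open>A representation of the defining relations of the boundary quotient Q(P)
in a C*-algebra 'b: isometries V p and projections E X.\<close>
definition boundary_rep :: "('a \<Rightarrow> 'a \<Rightarrow> 'a) \<Rightarrow> ('a \<Rightarrow> 'b::cstar_algebra) \<Rightarrow> ('a set \<Rightarrow> 'b) \<Rightarrow> bool" where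
  "boundary_rep m V E \<longleftrightarrow>
     (\<forall>p. isometry (V p)) \<and>
     (\<forall>p q. V (m p q) = V p * V q) \<and>
     (\<forall>X\<in>constructible m. projection (E X)) \<and>
     (\<forall>p. \<forall>X\<in>constructible m. V p * E X * cstar (V p) = E (m p ` X)) \<and>
     E {} = 0 \<and> E UNIV = 1 \<and>
     (\<forall>X\<in>constructible m. \<forall>Y\<in>constructible m. E X * E Y = E (X \<inter> Y)) \<and>
     (\<forall>F. foundation_set m F \<longrightarrow>
        (\<forall>xs. distinct xs \<and> set xs = F \<longrightarrow> prod_list (map (\<lambda>X. 1 - E X) xs) = 0))"

definition covariant_rep :: "nat set \<Rightarrow> ('p::monoid_mult \<Rightarrow> nat \<Rightarrow> nat) \<Rightarrow>
    ('g::group_add \<Rightarrow> 'p \<Rightarrow> 'p) \<Rightarrow> ('g \<Rightarrow> 'p \<Rightarrow> 'g) \<Rightarrow>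
    ('g \<Rightarrow> 'b::cstar_algebra) \<Rightarrow> ('p \<Rightarrow> 'b) \<Rightarrow> bool" where
  "covariant_rep K d act restr U W \<longleftrightarrow>
     (\<forall>g. unitary (U g)) \<and> (\<forall>g h. U (g + h) = U g * U h) \<and>
     (\<forall>\<mu>. isometry (W \<mu>)) \<and> W 1 = 1 \<and> (\<forall>\<mu> \<nu>. W (\<mu> * \<nu>) = W \<mu> * W \<nu>) \<and>
     (\<forall>i\<in>K. (\<Sum>\<mu>\<in>{\<mu>. d \<mu> = ebasis i}. W \<mu> * cstar (W \<mu>)) = 1) \<and>
     (\<forall>g \<mu>. U g * W \<mu> = W (act g \<mu>) * U (restr g \<mu>))"

end

theory Submission
  imports Defs "HOL-Library.Function_Algebras"
begin


section \<open>Basic C*-algebra facts\<close>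

lemma scaleC_zero_left [simp]: "scaleC 0 (x::'b::cstar_algebra) = 0"
proof -
  have "scaleC 0 x = scaleC 0 x + scaleC 0 x"
    using scaleC_add_left[of 0 0 x] by simp
  then show ?thesis by simp
qed

lemma scaleC_zero_right [simp]: "scaleC a (0::'b::cstar_algebra) = 0"
proof -
  have "scaleC a (0::'b) = scaleC a 0 + scaleC a 0"
    using scaleC_add_right[of a 0 0] by simp
  then show ?thesis by simp
qed

lemma scaleC_real: "scaleC (complex_of_real r) (x::'b::cstar_algebra) = scaleR r x"
  by (simp add: scaleR_scaleC)

lemma scaleC_sum_right: "scaleC a (sum f A) = (\<Sum>i\<in>A. scaleC a (f i :: 'b::cstar_algebra))"
  by (induction A rule: infinite_finite_induct) (auto simp: scaleC_add_right)

lemma scaleC_sum_left: "scaleC (sum f A) (x::'b::cstar_algebra) = (\<Sum>i\<in>A. scaleC (f i) x)"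
  by (induction A rule: infinite_finite_induct) (auto simp: scaleC_add_left)

lemma cstar_zero [simp]: "cstar (0::'b::cstar_algebra) = 0"
proof -
  have "cstar (0::'b) = cstar 0 + cstar 0" using cstar_add[of 0 0] by simp
  then show ?thesis by simp
qed

lemma cstar_one [simp]: "cstar (1::'b::cstar_algebra) = 1"
proof -
  have "x * cstar 1 = x" for x :: 'b
  proof -
    have "cstar (cstar (x * cstar 1)) = cstar (cstar (cstar 1) * cstar x)"
      by (simp only: cstar_mult)
    also have "\<dots> = cstar (1 * cstar x)" by (simp only: cstar_cstar)
    finally show ?thesis by (simp add: cstar_cstar)
  qed
  from this[of 1] show ?thesis by simp
qed

lemma cstar_minus [simp]: "cstar (- x) = - cstar (x::'b::cstar_algebra)"
proof -
  have "cstar (- x) + cstar x = 0" by (simp flip: cstar_add)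
  then show ?thesis by (simp add: eq_neg_iff_add_eq_0)
qed

lemma cstar_diff [simp]: "cstar (x - y) = cstar x - cstar (y::'b::cstar_algebra)"
  using cstar_add[of x "- y"] by simp

lemma cstar_sum: "cstar (sum f A) = (\<Sum>i\<in>A. cstar (f i :: 'b::cstar_algebra))"
  by (induction A rule: infinite_finite_induct) (auto simp: cstar_add)

lemma cstar_scaleR [simp]: "cstar (scaleR r x) = scaleR r (cstar (x::'b::cstar_algebra))"
  by (simp add: scaleR_scaleC cstar_scaleC)

lemma cstar_power: "cstar (x ^ n) = (cstar (x::'b::cstar_algebra)) ^ n"
proof (induction n)
  case (Suc n)
  have "cstar (x ^ Suc n) = cstar (x * x ^ n)" by (simp only: power_Suc)
  also have "\<dots> = cstar (x ^ n) * cstar x" by (simp only: cstar_mult)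
  also have "\<dots> = cstar x ^ n * cstar x" using Suc by simp
  also have "\<dots> = cstar x ^ Suc n" by (simp only: power_Suc2)
  finally show ?case .
qed simp

lemma norm_cstar_le: "norm (x::'b::cstar_algebra) \<le> norm (cstar x)"
proof (cases "norm x = 0")
  case False
  have "norm x * norm x = norm (cstar x * x)" by (simp add: cstar_identity)
  also have "\<dots> \<le> norm (cstar x) * norm x" by (rule norm_mult_ineq)
  finally show ?thesis using False by (simp add: mult_le_cancel_right)
qed simp

lemma norm_cstar [simp]: "norm (cstar (x::'b::cstar_algebra)) = norm x"
  using norm_cstar_le[of x] norm_cstar_le[of "cstar x"] by (simp add: cstar_cstar)

lemma proj_norm_le: "projection (P::'b::cstar_algebra) \<Longrightarrow> norm P \<le> 1"
proof -
  assume "projection P"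
  then have "cstar P = P" "P * P = P" by (auto simp: projection_def)
  then have h: "norm P = norm P * norm P"
    using cstar_identity[of P] by simp
  have "norm P = 0 \<or> norm P = 1" using mult_cancel_right1[of "norm P" "norm P"] h by blast
  then show ?thesis by auto
qed

lemma proj_compl: "projection (P::'b::cstar_algebra) \<Longrightarrow> projection (1 - P)"
proof -
  assume "projection P"
  then have a: "cstar P = P" "P * P = P" by (auto simp: projection_def)
  have "(1 - P) * (1 - P) = 1 - P - P + P * P" by (simp add: algebra_simps)
  then have "(1 - P) * (1 - P) = 1 - P" using a by simp
  then show ?thesis using a by (simp add: projection_def)
qed

lemma sa_pow2_norm:
  assumes "cstar h = (h::'b::cstar_algebra)"
  shows "norm (h ^ (2 ^ k)) = norm h ^ (2 ^ k)"
proof (induction k)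
  case (Suc k)
  have e: "2 ^ Suc k = 2 ^ k + (2::nat) ^ k" by simp
  have c: "cstar (h ^ (2 ^ k)) = h ^ (2 ^ k)" by (simp only: cstar_power assms)
  have "norm (h ^ (2 ^ Suc k)) = norm (h ^ (2 ^ k) * h ^ (2 ^ k))" by (simp only: e power_add)
  also have "\<dots> = norm (cstar (h ^ (2 ^ k)) * h ^ (2 ^ k))" by (simp only: c)
  also have "\<dots> = norm (h ^ (2 ^ k)) * norm (h ^ (2 ^ k))" by (rule cstar_identity)
  also have "\<dots> = norm h ^ (2 ^ k) * norm h ^ (2 ^ k)" by (simp only: Suc.IH)
  also have "\<dots> = norm h ^ (2 ^ Suc k)" by (simp only: e power_add)
  finally show ?case .
qed simp

lemma block_pow:
  fixes A B :: "'b::cstar_algebra"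
  assumes "A * B = 0" "B * A = 0"
  shows "(A + B) ^ (2 ^ k) = A ^ (2 ^ k) + B ^ (2 ^ k)"
proof (induction k)
  case (Suc k)
  have AB: "A ^ Suc a * B ^ Suc b = 0" for a b
  proof -
    have "A ^ Suc a * B ^ Suc b = (A ^ a * A) * (B * B ^ b)"
      by (simp only: power_Suc2[of A a] power_Suc[of B b])
    also have "\<dots> = A ^ a * (A * B) * B ^ b" by (simp only: mult.assoc)
    finally have "A ^ Suc a * B ^ Suc b = A ^ a * (A * B) * B ^ b" .
    then show ?thesis using assms by simp
  qed
  have BA: "B ^ Suc a * A ^ Suc b = 0" for a b
  proof -
    have "B ^ Suc a * A ^ Suc b = (B ^ a * B) * (A * A ^ b)"
      by (simp only: power_Suc2[of B a] power_Suc[of A b])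
    also have "\<dots> = B ^ a * (B * A) * A ^ b" by (simp only: mult.assoc)
    finally have "B ^ Suc a * A ^ Suc b = B ^ a * (B * A) * A ^ b" .
    then show ?thesis using assms by simp
  qed
  have "2 ^ k \<noteq> (0::nat)" by simp
  then obtain q where q: "2 ^ k = Suc q" using not0_implies_Suc by blast
  have e2: "2 ^ Suc k = 2 ^ k + (2::nat) ^ k" by simp
  have "(A + B) ^ (2 ^ Suc k) = (A + B) ^ (2 ^ k) * (A + B) ^ (2 ^ k)"
    by (simp only: e2 power_add)
  also have "\<dots> = (A ^ (2 ^ k) + B ^ (2 ^ k)) * (A ^ (2 ^ k) + B ^ (2 ^ k))"
    by (simp only: Suc.IH)
  also have "\<dots> = (A ^ Suc q + B ^ Suc q) * (A ^ Suc q + B ^ Suc q)" by (simp only: q)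
  also have "\<dots> = A ^ Suc q * A ^ Suc q + B ^ Suc q * A ^ Suc q
      + (A ^ Suc q * B ^ Suc q + B ^ Suc q * B ^ Suc q)"
    by (simp only: distrib_left distrib_right)
  also have "\<dots> = A ^ Suc q * A ^ Suc q + B ^ Suc q * B ^ Suc q"
    by (simp only: AB BA add_0_left add_0_right)
  also have "\<dots> = A ^ (2 ^ Suc k) + B ^ (2 ^ Suc k)"
  proof -
    have e: "2 ^ Suc k = Suc q + Suc q" using q by simp
    show ?thesis by (simp only: e power_add)
  qed
  finally show ?case .
qed simp

lemma block_norm:
  fixes A B :: "'b::cstar_algebra"
  assumes sa: "cstar A = A" "cstar B = B" and AB: "A * B = 0"
  shows "norm (A + B) \<le> max (norm A) (norm B)"
proof (rule ccontr)
  assume neg: "\<not> ?thesis"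
  define M where "M = max (norm A) (norm B)"
  have lt: "M < norm (A + B)" using neg unfolding M_def by (simp only: not_le)
  have BA: "B * A = 0" using arg_cong[OF AB, of cstar] sa by (simp add: cstar_mult)
  have hsa: "cstar (A + B) = A + B" using sa by (simp add: cstar_add)
  have bound: "norm (A + B) ^ (2 ^ k) \<le> 2 * M ^ (2 ^ k)" for k
  proof -
    have "norm (A + B) ^ (2 ^ k) = norm ((A + B) ^ (2 ^ k))" using sa_pow2_norm[OF hsa] by simp
    also have "\<dots> = norm (A ^ (2 ^ k) + B ^ (2 ^ k))" using block_pow[OF AB BA] by simp
    also have "\<dots> \<le> norm (A ^ (2 ^ k)) + norm (B ^ (2 ^ k))" by (rule norm_triangle_ineq)
    also have "\<dots> = norm A ^ (2 ^ k) + norm B ^ (2 ^ k)"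
      using sa_pow2_norm[OF sa(1)] sa_pow2_norm[OF sa(2)] by simp
    also have "\<dots> \<le> M ^ (2 ^ k) + M ^ (2 ^ k)"
      by (intro add_mono power_mono) (auto simp: M_def)
    finally show ?thesis by simp
  qed
  show False
  proof (cases "M = 0")
    case True
    then have "A = 0" "B = 0" unfolding M_def by (auto simp: max_def split: if_splits)
    then show False using lt True by simp
  next
    case False
    have "M \<ge> 0" unfolding M_def by (simp add: le_max_iff_disj)
    then have Mpos: "M > 0" using False by simp
    define r where "r = norm (A + B) / M"
    have r1: "r > 1" using lt Mpos by (simp add: r_def)
    obtain n :: nat where n: "1 < real n * (r - 1)"
      using r1 reals_Archimedean3[of "r - 1"] by auto
    have "1 + real (2 ^ n) * (r - 1) \<le> (1 + (r - 1)) ^ (2 ^ n)"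
      by (rule Bernoulli_inequality) (use r1 in simp)
    also have "\<dots> = r ^ (2 ^ n)" by simp
    also have "\<dots> = norm (A + B) ^ (2 ^ n) / M ^ (2 ^ n)" by (simp add: r_def power_divide)
    also have "\<dots> \<le> 2" using bound[of n] Mpos by (simp add: divide_le_eq)
    finally have "real (2 ^ n) * (r - 1) \<le> 1" by simp
    moreover have "n < 2 ^ n" by (rule less_exp)
    then have "real n \<le> real (2 ^ n)" by simp
    then have "real n * (r - 1) \<le> real (2 ^ n) * (r - 1)"
      using r1 by (intro mult_right_mono) auto
    ultimately show False using n by simp
  qed
qed

lemma good_PQP:
  fixes P Q :: "'b::cstar_algebra"
  assumes P: "projection P" and Q: "projection Q"
  shows "norm (1 - P * Q * P) \<le> 1"
proof -
  have Ps: "cstar P = P" "P * P = P" and Qs: "cstar Q = Q" "Q * Q = Q"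
    using P Q by (auto simp: projection_def)
  have eq: "1 - P * Q * P = (1 - P) + P * (1 - Q) * P"
    using Ps by (simp add: algebra_simps)
  have sa1: "cstar (1 - P) = 1 - P" using Ps by simp
  have sa2: "cstar (P * (1 - Q) * P) = P * (1 - Q) * P"
    using Ps Qs by (simp add: cstar_mult mult.assoc)
  have z: "(1 - P) * P = 0" using Ps by (simp add: algebra_simps)
  have "(1 - P) * (P * (1 - Q) * P) = ((1 - P) * P) * ((1 - Q) * P)" by (simp only: mult.assoc)
  then have prod: "(1 - P) * (P * (1 - Q) * P) = 0" using z by simp
  have n1: "norm (1 - P) \<le> 1" by (rule proj_norm_le[OF proj_compl[OF P]])
  have "norm (P * (1 - Q) * P) \<le> norm P * norm (1 - Q) * norm P"
    using norm_mult_ineq[of "P * (1 - Q)" P] norm_mult_ineq[of P "1 - Q"]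
    by (meson mult_right_mono norm_ge_zero order_trans)
  also have "\<dots> \<le> 1 * 1 * 1"
    using proj_norm_le[OF P] proj_norm_le[OF proj_compl[OF Q]]
    by (intro mult_mono) auto
  finally have n2: "norm (P * (1 - Q) * P) \<le> 1" by simp
  have m: "max (norm (1 - P)) (norm (P * (1 - Q) * P)) \<le> 1" using n1 n2 by simp
  show ?thesis unfolding eq by (rule order_trans[OF block_norm[OF sa1 sa2 prod] m])
qed


section \<open>Self-adjoint elements with both 1+b and 1-b contractive vanish\<close>

lemma contr_line:
  fixes b :: "'b::cstar_algebra"
  assumes m: "norm (1 - b) \<le> 1" and p: "norm (1 + b) \<le> 1" and s: "\<bar>s\<bar> \<le> 1"
  shows "norm (1 + s *\<^sub>R b) \<le> 1"
proof (cases "s \<ge> 0")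
  case True
  have eq: "1 + s *\<^sub>R b = (1 - s) *\<^sub>R 1 + s *\<^sub>R (1 + b)" by (simp add: algebra_simps)
  have "norm (1 + s *\<^sub>R b) \<le> norm ((1 - s) *\<^sub>R (1::'b)) + norm (s *\<^sub>R (1 + b))"
    unfolding eq by (rule norm_triangle_ineq)
  also have "\<dots> = (1 - s) + s * norm (1 + b)" using True s by simp
  also have "\<dots> \<le> (1 - s) + s * 1" using True p by (intro add_left_mono mult_left_mono) auto
  finally show ?thesis by simp
next
  case False
  have eq: "1 + s *\<^sub>R b = (1 + s) *\<^sub>R 1 + (- s) *\<^sub>R (1 - b)" by (simp add: algebra_simps)
  have "norm (1 + s *\<^sub>R b) \<le> norm ((1 + s) *\<^sub>R (1::'b)) + norm ((- s) *\<^sub>R (1 - b))"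
    unfolding eq by (rule norm_triangle_ineq)
  also have "\<dots> = (1 + s) + (- s) * norm (1 - b)" using False s by simp
  also have "\<dots> \<le> (1 + s) + (- s) * 1" using False m by (intro add_left_mono mult_left_mono) auto
  finally show ?thesis by simp
qed

lemma sq_bound:
  fixes b :: "'b::cstar_algebra" and w :: complex
  assumes sa: "cstar b = b" and m: "norm (1 - b) \<le> 1" and p: "norm (1 + b) \<le> 1"
    and re: "\<bar>Re w\<bar> \<le> 1"
  shows "norm (1 + scaleC w b) ^ 2 \<le> 1 + (Im w) ^ 2 * norm b ^ 2"
proof -
  define a where "a = Re w"
  define c where "c = Im w"
  define x where "x = 1 + scaleC w b"
  have cx: "cstar x = 1 + scaleC (cnj w) b"
    by (simp add: x_def cstar_add cstar_scaleC sa)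
  have uv: "scaleC (cnj w) b * scaleC w b = scaleC (cnj w * w) (b * b)"
    by (simp add: mult_scaleC_left mult_scaleC_right scaleC_scaleC mult.commute)
  have "cstar x * x = (1 + scaleC (cnj w) b) * x" by (simp only: cx)
  also have "\<dots> = 1 + (scaleC w b + scaleC (cnj w) b) + scaleC (cnj w) b * scaleC w b"
    unfolding x_def by (simp add: algebra_simps)
  also have "scaleC w b + scaleC (cnj w) b = scaleC (w + cnj w) b" by (simp add: scaleC_add_left)
  also have "\<dots> = (2 * a) *\<^sub>R b" by (simp only: complex_add_cnj scaleC_real a_def)
  also have "scaleC (cnj w) b * scaleC w b = (a ^ 2 + c ^ 2) *\<^sub>R (b * b)"
    unfolding uv by (simp only: mult.commute[of "cnj w"] complex_mult_cnj scaleC_real a_def c_def)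
  finally have eq0: "cstar x * x = 1 + (2 * a) *\<^sub>R b + (a ^ 2 + c ^ 2) *\<^sub>R (b * b)"
    by (simp add: algebra_simps)
  have t: "(2 * a) *\<^sub>R b = a *\<^sub>R b + a *\<^sub>R b" by (metis mult_2 scaleR_add_left)
  have eq: "cstar x * x = (1 + a *\<^sub>R b) * (1 + a *\<^sub>R b) + (c ^ 2) *\<^sub>R (b * b)"
    unfolding eq0 t by (simp add: algebra_simps power2_eq_square scaleR_add_left)
  have na: "norm (1 + a *\<^sub>R b) \<le> 1" using contr_line[OF m p] re by (simp add: a_def)
  have "norm x * norm x = norm (cstar x * x)" by (simp add: cstar_identity)
  also have "\<dots> \<le> norm ((1 + a *\<^sub>R b) * (1 + a *\<^sub>R b)) + norm ((c ^ 2) *\<^sub>R (b * b))"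
    unfolding eq by (rule norm_triangle_ineq)
  also have "\<dots> \<le> norm (1 + a *\<^sub>R b) * norm (1 + a *\<^sub>R b) + c ^ 2 * (norm b * norm b)"
    by (intro add_mono norm_mult_ineq) (simp add: norm_mult_ineq mult_left_mono)
  also have "\<dots> \<le> 1 * 1 + c ^ 2 * (norm b * norm b)"
    using na by (intro add_right_mono mult_mono) auto
  finally show ?thesis by (simp add: x_def c_def power2_eq_square)
qed

fun pc :: "'b::cstar_algebra \<Rightarrow> nat \<Rightarrow> nat \<Rightarrow> 'b" where
  "pc y 0 m = (if m = 0 then 1 else 0)"
| "pc y (Suc n) m = pc y n m + (if m = 0 then 0 else y * pc y n (m - 1))"

lemma pc_high: "n < m \<Longrightarrow> pc y n m = 0"
  by (induction n arbitrary: m) auto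

lemma pc_zero: "pc y n 0 = 1"
  by (induction n) auto

lemma pc_one: "pc y n (Suc 0) = real n *\<^sub>R y"
  by (induction n) (auto simp: pc_zero algebra_simps)

lemma pc_poly:
  fixes y :: "'b::cstar_algebra"
  shows "(1 + scaleC z y) ^ n = (\<Sum>m\<le>n. scaleC (z ^ m) (pc y n m))"
proof (induction n)
  case 0
  then show ?case by (simp add: scaleC_one)
next
  case (Suc n)
  have prod: "scaleC z y * scaleC (z ^ m) c = scaleC (z ^ Suc m) (y * c)" for m c
    by (simp add: mult_scaleC_left mult_scaleC_right scaleC_scaleC mult.commute)
  have "(1 + scaleC z y) ^ Suc n = (1 + scaleC z y) * (\<Sum>m\<le>n. scaleC (z ^ m) (pc y n m))"
    using Suc by (simp only: power_Suc)
  also have "\<dots> = (\<Sum>m\<le>n. scaleC (z ^ m) (pc y n m))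
      + (\<Sum>m\<le>n. scaleC (z ^ Suc m) (y * pc y n m))"
    by (simp add: distrib_right sum_distrib_left prod sum.distrib)
  also have "\<dots> = (\<Sum>m\<le>Suc n. scaleC (z ^ m) (pc y n m))
      + (\<Sum>m\<le>Suc n. scaleC (z ^ m) (if m = 0 then 0 else y * pc y n (m - 1)))"
  proof -
    have c1: "(\<Sum>m\<le>Suc n. scaleC (z ^ m) (pc y n m)) = (\<Sum>m\<le>n. scaleC (z ^ m) (pc y n m))"
      by (simp add: pc_high)
    have c2: "(\<Sum>m\<le>Suc n. scaleC (z ^ m) (if m = 0 then 0 else y * pc y n (m - 1)))
        = (\<Sum>m\<le>n. scaleC (z ^ Suc m) (y * pc y n m))"
      by (subst sum.atMost_Suc_shift) simp
    show ?thesis by (simp only: c1 c2)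
  qed
  also have "\<dots> = (\<Sum>m\<le>Suc n. scaleC (z ^ m) (pc y (Suc n) m))"
    by (simp add: sum.distrib scaleC_add_right)
  finally show ?case .
qed

lemma roots_sum:
  fixes N j :: nat
  assumes N: "N > 0"
  shows "(\<Sum>k<N. (cis (2 * pi / real N) ^ j) ^ k) = (if N dvd j then of_nat N else 0)"
proof -
  define q where "q = cis (2 * pi / real N) ^ j"
  have q': "q = cis (2 * pi * real j / real N)"
    unfolding q_def Complex.DeMoivre by (rule arg_cong[where f=cis]) (simp add: field_simps)
  have qN: "q ^ N = 1"
  proof -
    have "q ^ N = cis (2 * pi * real j)" using N by (simp add: q' Complex.DeMoivre field_simps)
    also have "\<dots> = 1" by (rule cis_multiple_2pi) simp
    finally show ?thesis .
  qed
  show ?thesis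
  proof (cases "N dvd j")
    case True
    then obtain t where t: "j = N * t" by (auto simp: dvd_def)
    have "2 * pi * real j / real N = 2 * pi * real t" using N by (simp add: t)
    then have "q = cis (2 * pi * real t)" by (simp only: q')
    also have "\<dots> = 1" by (rule cis_multiple_2pi) simp
    finally show ?thesis using True by (simp add: q_def[symmetric])
  next
    case False
    have "q \<noteq> 1"
    proof
      assume "q = 1"
      then have "cos (2 * pi * real j / real N) = 1" by (simp add: q' complex_eq_iff)
      then obtain t :: int where t: "2 * pi * real j / real N = t * 2 * pi"
        by (auto simp: cos_one_2pi_int)
      then have "real j = real N * t" using N by (simp add: field_simps)
      then have "real_of_int (int j) = real_of_int (int N * t)" by simp
      then have "int j = int N * t" by (simp only: of_int_eq_iff)
      then have "int N dvd int j" by simp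
      then show False using False by simp
    qed
    then have "(\<Sum>k<N. q ^ k) = (1 - q ^ N) / (1 - q)" by (simp add: sum_gp_strict)
    also have "\<dots> = 0" using qN by simp
    finally show ?thesis using False by (simp add: q_def)
  qed
qed

lemma dvd_shift:
  fixes m n N :: nat
  assumes "m \<le> n" "N = n + 2"
  shows "N dvd (N - 1 + m) \<longleftrightarrow> m = 1"
proof
  assume d: "N dvd (N - 1 + m)"
  then obtain t where t: "N - 1 + m = N * t" by (auto simp: dvd_def)
  show "m = 1"
  proof (cases t)
    case 0 then show ?thesis using t assms by simp
  next
    case (Suc t')
    show ?thesis
    proof (cases t')
      case 0 then show ?thesis using t assms Suc by simp
    next
      case (Suc t'')
      then have "N * t \<ge> 2 * N" using \<open>t = Suc t'\<close> by simp
      then show ?thesis using t assms by simp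
    qed
  qed
next
  assume "m = 1" then show "N dvd (N - 1 + m)" using assms by simp
qed

lemma coeff_extract:
  fixes c :: "nat \<Rightarrow> 'b::cstar_algebra" and n N :: nat and R :: real
  assumes n: "n \<ge> 1" and N: "N = n + 2"
  defines "\<omega> \<equiv> cis (2 * pi / real N)"
  shows "(\<Sum>k<N. scaleC (\<omega> ^ (k * (N - 1))) (\<Sum>m\<le>n. scaleC ((complex_of_real R * \<omega> ^ k) ^ m) (c m)))
         = scaleC (complex_of_real (R * real N)) (c 1)"
proof -
  have inner: "(\<Sum>k<N. \<omega> ^ (k * (N - 1)) * (complex_of_real R * \<omega> ^ k) ^ m)
      = (if m = 1 then complex_of_real (R * real N) else 0)" if m: "m \<le> n" for m
  proof -
    have "(\<Sum>k<N. \<omega> ^ (k * (N - 1)) * (complex_of_real R * \<omega> ^ k) ^ m)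
        = (\<Sum>k<N. complex_of_real R ^ m * (\<omega> ^ (N - 1 + m)) ^ k)"
    proof (intro sum.cong refl)
      fix k assume "k \<in> {..<N}"
      have e1: "(complex_of_real R * \<omega> ^ k) ^ m = complex_of_real R ^ m * \<omega> ^ (k * m)"
        by (simp add: power_mult_distrib power_mult)
      have e3: "(N - 1 + m) * k = k * (N - 1) + k * m" by (simp add: algebra_simps)
      have e2: "(\<omega> ^ (N - 1 + m)) ^ k = \<omega> ^ (k * (N - 1)) * \<omega> ^ (k * m)"
        by (subst power_mult[symmetric]) (simp only: e3 power_add)
      show "\<omega> ^ (k * (N - 1)) * (complex_of_real R * \<omega> ^ k) ^ m
          = complex_of_real R ^ m * (\<omega> ^ (N - 1 + m)) ^ k"
        by (simp only: e1 e2 mult_ac)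
    qed
    also have "\<dots> = complex_of_real R ^ m * (\<Sum>k<N. (\<omega> ^ (N - 1 + m)) ^ k)"
      by (simp add: sum_distrib_left)
    also have "\<dots> = complex_of_real R ^ m * (if N dvd (N - 1 + m) then of_nat N else 0)"
      using N unfolding \<omega>_def by (subst roots_sum) auto
    also have "\<dots> = (if m = 1 then complex_of_real (R * real N) else 0)"
      using dvd_shift[OF m N] by simp
    finally show ?thesis .
  qed
  have "(\<Sum>k<N. scaleC (\<omega> ^ (k * (N - 1))) (\<Sum>m\<le>n. scaleC ((complex_of_real R * \<omega> ^ k) ^ m) (c m)))
      = (\<Sum>k<N. \<Sum>m\<le>n. scaleC (\<omega> ^ (k * (N - 1)) * (complex_of_real R * \<omega> ^ k) ^ m) (c m))"
    by (simp add: scaleC_sum_right scaleC_scaleC)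
  also have "\<dots> = (\<Sum>m\<le>n. \<Sum>k<N. scaleC (\<omega> ^ (k * (N - 1)) * (complex_of_real R * \<omega> ^ k) ^ m) (c m))"
    by (rule sum.swap)
  also have "\<dots> = (\<Sum>m\<le>n. scaleC (\<Sum>k<N. \<omega> ^ (k * (N - 1)) * (complex_of_real R * \<omega> ^ k) ^ m) (c m))"
    by (simp add: scaleC_sum_left)
  also have "\<dots> = (\<Sum>m\<le>n. if m = 1 then scaleC (complex_of_real (R * real N)) (c m) else 0)"
  proof (intro sum.cong refl)
    fix m assume "m \<in> {..n}"
    then have "m \<le> n" by simp
    show "scaleC (\<Sum>k<N. \<omega> ^ (k * (N - 1)) * (complex_of_real R * \<omega> ^ k) ^ m) (c m)
        = (if m = 1 then scaleC (complex_of_real (R * real N)) (c m) else 0)"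
      by (simp only: inner[OF \<open>m \<le> n\<close>]) simp
  qed
  also have "\<dots> = scaleC (complex_of_real (R * real N)) (c 1)"
    using n by simp
  finally show ?thesis .
qed


lemma exp1_le3: "(1 + 1 / real n) ^ n \<le> 3"
proof -
  have "(1 + 1 / real n) ^ n \<le> exp (1 / real n) ^ n"
    by (intro power_mono) (auto simp: exp_ge_add_one_self add_nonneg_nonneg)
  also have "\<dots> \<le> exp 1"
  proof (cases "n = 0")
    case False
    have "exp (1 / real n) ^ n = exp (real n * (1 / real n))" by (rule exp_of_nat_mult[symmetric])
    also have "\<dots> = exp 1" using False by simp
    finally show ?thesis by simp
  qed simp
  also have "\<dots> \<le> 1 + 1 + 1 ^ 2" by (rule exp_bound) auto
  finally show ?thesis by simp
qed

lemma F1: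
  fixes b :: "'b::cstar_algebra"
  assumes sa: "cstar b = b" and m: "norm (1 - b) \<le> 1" and p: "norm (1 + b) \<le> 1"
  shows "b = 0"
proof (rule ccontr)
  assume b0: "b \<noteq> 0"
  define \<beta> where "\<beta> = norm b"
  have \<beta>pos: "\<beta> > 0" using b0 by (simp add: \<beta>_def)
  define R where "R = 3 / \<beta>"
  have Rpos: "R > 0" using \<beta>pos by (simp add: R_def)
  have R\<beta>: "R * \<beta> = 3" using \<beta>pos by (simp add: R_def)
  define n :: nat where "n = nat \<lceil>R\<rceil> + 9"
  have n9: "real n \<ge> 9" by (simp add: n_def)
  have nR: "R \<le> real n" unfolding n_def by linarith
  have n1: "n \<ge> 1" using n9 by simp
  define N where "N = n + 2"
  have Npos: "N > 0" by (simp add: N_def)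
  define \<omega> where "\<omega> = cis (2 * pi / real N)"
  define y where "y = (1 / real n) *\<^sub>R b"
  have c1: "pc y n 1 = b" using n1 by (simp add: pc_one y_def)
  have Qb: "norm ((1 + scaleC (complex_of_real R * \<omega> ^ k) y) ^ n) \<le> 2" for k
  proof -
    define z where "z = complex_of_real R * \<omega> ^ k"
    define w where "w = z * complex_of_real (1 / real n)"
    have zw: "scaleC z y = scaleC w b"
      by (simp add: y_def w_def scaleR_scaleC scaleC_scaleC)
    have cz: "cmod z = R" using Rpos by (simp add: z_def \<omega>_def norm_mult norm_power)
    have cw: "cmod w = R / real n" using Rpos by (simp add: w_def cz norm_divide)
    have "0 < real n" using n9 by simp
    then have "R / real n \<le> real n / real n" using nR by (intro divide_right_mono) auto
    then have "R / real n \<le> 1" using \<open>0 < real n\<close> by simp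
    then have re: "\<bar>Re w\<bar> \<le> 1"
      using abs_Re_le_cmod[of w] cw by linarith
    have im: "(Im w) ^ 2 \<le> (R / real n) ^ 2"
    proof -
      have "\<bar>Im w\<bar> \<le> R / real n" using abs_Im_le_cmod[of w] cw by simp
      then have "\<bar>Im w\<bar> ^ 2 \<le> (R / real n) ^ 2" by (intro power_mono) auto
      then show ?thesis by simp
    qed
    have s1: "norm (1 + scaleC w b) ^ 2 \<le> 1 + (Im w) ^ 2 * norm b ^ 2"
      by (rule sq_bound[OF sa m p re])
    have s2: "(Im w) ^ 2 * norm b ^ 2 \<le> (R / real n) ^ 2 * \<beta> ^ 2"
      using mult_right_mono[OF im, of "norm b ^ 2"] by (simp add: \<beta>_def)
    have s3: "(R / real n) ^ 2 * \<beta> ^ 2 = 9 / (real n) ^ 2"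
    proof -
      have "(R / real n) ^ 2 * \<beta> ^ 2 = (R / real n * \<beta>) ^ 2" by (rule power_mult_distrib[symmetric])
      also have "R / real n * \<beta> = 3 / real n" using R\<beta> by (simp add: field_simps)
      also have "(3 / real n) ^ 2 = 9 / (real n) ^ 2" by (simp add: power_divide)
      finally show ?thesis .
    qed
    have s4: "9 / (real n) ^ 2 \<le> 1 / real n"
    proof -
      have np: "0 < real n" using n9 by simp
      have "9 / (real n) ^ 2 = (9 / real n) * (1 / real n)" by (simp add: power2_eq_square)
      also have "\<dots> \<le> 1 * (1 / real n)"
        using n9 np by (intro mult_right_mono) (auto simp: divide_le_eq_1)
      finally show ?thesis by simp
    qed
    have x2: "norm (1 + scaleC w b) ^ 2 \<le> 1 + 1 / real n" using s1 s2 s3 s4 by linarith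
    have p1: "norm ((1 + scaleC w b) ^ n) \<le> norm (1 + scaleC w b) ^ n" by (rule norm_power_ineq)
    have p2: "(norm (1 + scaleC w b) ^ n) ^ 2 = (norm (1 + scaleC w b) ^ 2) ^ n"
      by (metis power_mult mult.commute)
    have p3: "(norm (1 + scaleC w b) ^ 2) ^ n \<le> (1 + 1 / real n) ^ n"
      by (rule power_mono[OF x2]) simp
    have p4: "norm ((1 + scaleC w b) ^ n) ^ 2 \<le> (norm (1 + scaleC w b) ^ n) ^ 2"
      by (rule power_mono[OF p1]) simp
    have sq3: "norm ((1 + scaleC w b) ^ n) ^ 2 \<le> 3" using p2 p3 p4 exp1_le3[of n] by linarith
    have "norm ((1 + scaleC w b) ^ n) \<le> 2"
    proof (rule ccontr)
      assume "\<not> norm ((1 + scaleC w b) ^ n) \<le> 2"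
      then have "2 < norm ((1 + scaleC w b) ^ n)" by simp
      then have "2 ^ 2 < norm ((1 + scaleC w b) ^ n) ^ 2" by (rule power_strict_mono) auto
      then show False using sq3 by simp
    qed
    then show ?thesis by (simp add: z_def[symmetric] zw)
  qed
  have eqs: "(\<Sum>k<N. scaleC (\<omega> ^ (k * (N - 1))) ((1 + scaleC (complex_of_real R * \<omega> ^ k) y) ^ n))
      = scaleC (complex_of_real (R * real N)) b"
    unfolding pc_poly using coeff_extract[OF n1 N_def, of R "pc y n"] c1
    by (simp add: \<omega>_def)
  have "norm (scaleC (complex_of_real (R * real N)) b) = \<bar>R * real N\<bar> * \<beta>"
    by (simp only: norm_scaleC norm_of_real \<beta>_def)
  then have "R * real N * \<beta> = norm (scaleC (complex_of_real (R * real N)) b)"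
    using Rpos by simp
  also have "\<dots> \<le> (\<Sum>k<N. norm (scaleC (\<omega> ^ (k * (N - 1))) ((1 + scaleC (complex_of_real R * \<omega> ^ k) y) ^ n)))"
    unfolding eqs[symmetric] by (rule norm_sum)
  also have "\<dots> = (\<Sum>k<N. norm ((1 + scaleC (complex_of_real R * \<omega> ^ k) y) ^ n))"
    by (simp add: norm_scaleC \<omega>_def norm_power)
  also have "\<dots> \<le> (\<Sum>k<N. 2)" by (intro sum_mono Qb)
  also have "\<dots> = 2 * real N" by simp
  finally have le: "R * real N * \<beta> \<le> 2 * real N" .
  have "R * real N * \<beta> = (R * \<beta>) * real N" by (simp only: mult_ac)
  then have "R * real N * \<beta> = 3 * real N" using R\<beta> by simp
  then show False using le Npos by simp
qed

lemma proj_sum_orth: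
  fixes f :: "'i \<Rightarrow> 'b::cstar_algebra"
  assumes fin: "finite I" and pr: "\<And>i. i \<in> I \<Longrightarrow> projection (f i)"
    and s1: "sum f I = 1" and i: "i \<in> I" and j: "j \<in> I" and ij: "i \<noteq> j"
  shows "f i * f j = 0"
proof -
  define P where "P = f i"
  have Pp: "cstar P = P" "P * P = P" using pr[OF i] by (auto simp: P_def projection_def)
  define a where "a k = P * f k * P" for k
  have rest: "(\<Sum>k\<in>I - {i}. f k) = 1 - P"
    using s1 sum.remove[OF fin i, of f] by (simp add: P_def algebra_simps)
  have "(\<Sum>k\<in>I - {i}. a k) = P * (\<Sum>k\<in>I - {i}. f k) * P"
    by (simp add: a_def sum_distrib_left sum_distrib_right)
  also have "\<dots> = 0" using Pp by (simp add: rest algebra_simps)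
  finally have sa0: "(\<Sum>k\<in>I - {i}. a k) = 0" .
  define T where "T = I - {i} - {j}"
  have finT: "finite T" using fin by (simp add: T_def)
  have jI: "j \<in> I - {i}" using j ij by simp
  have "(\<Sum>k\<in>I - {i}. a k) = a j + (\<Sum>k\<in>T. a k)"
    using sum.remove[OF _ jI, of a] fin by (simp add: T_def)
  then have aj: "a j = - (\<Sum>k\<in>T. a k)" using sa0 by (simp add: eq_neg_iff_add_eq_0)
  have good: "norm (1 - a k) \<le> 1" if "k \<in> I" for k
    unfolding a_def by (rule good_PQP[OF pr[OF i, folded P_def] pr[OF that]])
  have sak: "cstar (a k) = a k" if "k \<in> I" for k
    using pr[OF that] Pp by (simp add: a_def cstar_mult projection_def mult.assoc)
  have ajz: "a j = 0"
  proof (cases "T = {}")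
    case True then show ?thesis using aj by simp
  next
    case False
    define n where "n = card T"
    have npos: "n > 0" using False finT by (simp add: n_def card_gt_0_iff)
    define b where "b = (1 / real n) *\<^sub>R a j"
    have sab: "cstar b = b" using sak[OF j] by (simp add: b_def)
    have eqb: "1 - b = (1 - 1 / real n) *\<^sub>R 1 + (1 / real n) *\<^sub>R (1 - a j)"
      by (simp add: b_def algebra_simps)
    have "norm (1 - b) \<le> norm ((1 - 1 / real n) *\<^sub>R (1::'b)) + norm ((1 / real n) *\<^sub>R (1 - a j))"
      unfolding eqb by (rule norm_triangle_ineq)
    also have "\<dots> \<le> (1 - 1 / real n) + (1 / real n)"
    proof (rule add_mono)
      have "1 / real n \<le> 1" using npos by simp
      then show "norm ((1 - 1 / real n) *\<^sub>R (1::'b)) \<le> 1 - 1 / real n" by simp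
      have "norm ((1 / real n) *\<^sub>R (1 - a j)) = (1 / real n) * norm (1 - a j)" by simp
      also have "\<dots> \<le> (1 / real n) * 1" using good[OF j] by (intro mult_left_mono) auto
      finally show "norm ((1 / real n) *\<^sub>R (1 - a j)) \<le> 1 / real n" by simp
    qed
    finally have mb: "norm (1 - b) \<le> 1" by simp
    have "1 + b = (1 / real n) *\<^sub>R (\<Sum>k\<in>T. (1 - a k))"
    proof -
      have h: "(\<Sum>k\<in>T. (1 - a k)) = real n *\<^sub>R 1 - (\<Sum>k\<in>T. a k)"
        by (simp add: sum_subtractf n_def scaleR_conv_of_real)
      have "(1 / real n) *\<^sub>R (\<Sum>k\<in>T. (1 - a k))
          = (1 / real n) *\<^sub>R (real n *\<^sub>R 1) - (1 / real n) *\<^sub>R (\<Sum>k\<in>T. a k)"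
        by (simp only: h scaleR_diff_right)
      also have "(1 / real n) *\<^sub>R (real n *\<^sub>R (1::'b)) = 1" using npos by simp
      also have "1 - (1 / real n) *\<^sub>R (\<Sum>k\<in>T. a k) = 1 + b" by (simp add: b_def aj)
      finally show ?thesis by simp
    qed
    then have "norm (1 + b) \<le> (1 / real n) * (\<Sum>k\<in>T. norm (1 - a k))"
      using norm_sum[of "\<lambda>k. 1 - a k" T] npos by (simp add: divide_right_mono)
    also have "\<dots> \<le> (1 / real n) * (\<Sum>k\<in>T. 1)"
      using good npos by (intro mult_left_mono sum_mono) (auto simp: T_def)
    also have "\<dots> = 1" using npos by (simp add: n_def)
    finally have pb: "norm (1 + b) \<le> 1" .
    have "b = 0" by (rule F1[OF sab mb pb])
    then show ?thesis using npos by (simp add: b_def)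
  qed
  have "norm (f j * P) * norm (f j * P) = norm (cstar (f j * P) * (f j * P))"
    by (simp add: cstar_identity)
  also have "cstar (f j * P) * (f j * P) = a j"
  proof -
    have fj: "cstar (f j) = f j" "f j * f j = f j" using pr[OF j] by (auto simp: projection_def)
    have "cstar (f j * P) * (f j * P) = (P * f j) * (f j * P)" using Pp fj by (simp add: cstar_mult)
    also have "\<dots> = P * (f j * f j) * P" by (simp only: mult.assoc)
    also have "\<dots> = a j" using fj by (simp add: a_def)
    finally show ?thesis .
  qed
  finally have "f j * P = 0" using ajz by simp
  then have "cstar (f j * P) = 0" by simp
  then show ?thesis using pr[OF j] Pp by (simp add: cstar_mult projection_def P_def)
qed




section \<open>Single-vertex k-graphs\<close>

locale kgraph =
  fixes K :: "nat set" and d :: "'p::monoid_mult \<Rightarrow> nat \<Rightarrow> nat"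
  assumes kg: "single_vertex_kgraph K d"
begin

lemma d_one [simp]: "d 1 = 0"
  using kg by (simp add: single_vertex_kgraph_def zero_fun_def)

lemma d_mult: "d (a * b) = d a + d b"
  using kg by (simp add: single_vertex_kgraph_def plus_fun_def)

lemma d_fin: "finite {i. d a i \<noteq> 0}"
  using kg by (simp add: single_vertex_kgraph_def)

lemma d_K: "i \<notin> K \<Longrightarrow> d a i = 0"
  using kg by (simp add: single_vertex_kgraph_def)

lemma edges: "i \<in> K \<Longrightarrow> finite {\<mu>. d \<mu> = ebasis i} \<and> {\<mu>. d \<mu> = ebasis i} \<noteq> {}"
  using kg by (simp add: single_vertex_kgraph_def)

lemma fact_ex1:
  "d \<mu> = m + n \<Longrightarrow> \<exists>!ab. d (fst ab) = m \<and> d (snd ab) = n \<and> \<mu> = fst ab * snd ab"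
  using kg unfolding single_vertex_kgraph_def plus_fun_def by blast

lemma factor:
  assumes "d \<mu> = m + n" shows "\<exists>a b. d a = m \<and> d b = n \<and> \<mu> = a * b"
  using fact_ex1[OF assms] by auto

lemma factor_uniq:
  assumes da: "d a = d a'" and eq: "a * b = a' * b'"
  shows "a = a' \<and> b = b'"
proof -
  have "d a + d b = d a' + d b'" using eq by (simp flip: d_mult)
  then have db: "d b = d b'" using da by (simp add: fun_eq_iff)
  have "d (a * b) = d a + d b" by (rule d_mult)
  from fact_ex1[OF this] have "(a, b) = (a', b')"
    using da db eq by (metis fst_conv snd_conv)
  then show ?thesis by simp
qed

lemma d_zero:
  assumes "d x = 0" shows "x = 1"
proof -
  have "d x = d 1" using assms by simp
  moreover have "x * 1 = 1 * x" by simp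
  ultimately show ?thesis using factor_uniq by blast
qed

lemma lcancel:
  fixes a b c :: 'p
  assumes "a * b = a * c" shows "b = c"
  using factor_uniq[of a a b c] assms by simp

lemma d_le_split: "(M :: nat \<Rightarrow> nat) \<le> N \<Longrightarrow> N = M + (N - M)"
  by (simp add: fun_eq_iff le_fun_def)

lemma prefix:
  assumes le: "d l \<le> d r" and eq: "r * \<alpha> = l * c"
  shows "\<exists>x. r = l * x"
proof -
  obtain r1 r2 where r: "d r1 = d l" "r = r1 * r2"
    using factor[OF d_le_split[OF le]] by blast
  have "r1 * (r2 * \<alpha>) = l * c" using eq r by (simp add: mult.assoc)
  then have "r1 = l" using factor_uniq r by blast
  then show ?thesis using r by blast
qed

definition Dset :: "(nat \<Rightarrow> nat) \<Rightarrow> 'p set" where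
  "Dset N = {\<rho>. d \<rho> = N}"

lemma rng_0: "0 \<in> range d"
  using d_one by (metis rangeI)

lemma rng_add: "N \<in> range d \<Longrightarrow> M \<in> range d \<Longrightarrow> N + M \<in> range d"
  by (auto simp flip: d_mult)

lemma rng_down: "M \<le> N \<Longrightarrow> N \<in> range d \<Longrightarrow> M \<in> range d"
proof -
  assume le: "M \<le> N" and "N \<in> range d"
  then obtain \<mu> where "d \<mu> = N" by auto
  then obtain a b where "d a = M" using factor[of \<mu> M "N - M"] d_le_split[OF le] by auto
  then show ?thesis by auto
qed

lemma rng_sup: "N \<in> range d \<Longrightarrow> M \<in> range d \<Longrightarrow> sup N M \<in> range d"
proof -
  assume N: "N \<in> range d" and M: "M \<in> range d"
  have "sup N M = N + (M - N)" by (auto simp: fun_eq_iff sup_nat_def)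
  moreover have "M - N \<in> range d" by (rule rng_down[OF _ M]) (simp add: le_fun_def)
  ultimately show ?thesis using rng_add[OF N] by simp
qed

lemma rng_K:
  assumes "N \<in> range d" "N i \<noteq> 0" shows "i \<in> K"
proof -
  obtain x where "N = d x" using assms(1) by auto
  then show ?thesis using d_K[of i x] assms(2) by auto
qed

lemma rng_fin: "N \<in> range d \<Longrightarrow> finite {i. N i \<noteq> 0}"
  using d_fin by auto

lemma rng_ebasis:
  assumes "i \<in> K" shows "ebasis i \<in> range d"
proof -
  obtain x where "d x = ebasis i" using edges[OF assms] by auto
  then show ?thesis by (metis rangeI)
qed

lemma deg_induct [consumes 1, case_names zero step]:
  assumes N: "N \<in> range d" and z: "Q 0"
    and st: "\<And>N i. N \<in> range d \<Longrightarrow> Q N \<Longrightarrow> i \<in> K \<Longrightarrow> Q (N + ebasis i)"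
  shows "Q N"
proof -
  have main: "\<forall>N. N \<in> range d \<longrightarrow> (\<forall>j\<ge>B. N j = 0) \<longrightarrow> Q N" for B
  proof (induction B)
    case 0
    show ?case
    proof (intro allI impI)
      fix N :: "nat \<Rightarrow> nat" assume "\<forall>j\<ge>0. N j = 0"
      then have "N = 0" by (simp add: fun_eq_iff)
      then show "Q N" using z by simp
    qed
  next
    case (Suc B)
    show ?case
    proof (intro allI impI)
      fix N :: "nat \<Rightarrow> nat" assume Nr: "N \<in> range d" and Nz: "\<forall>j\<ge>Suc B. N j = 0"
      define N' where "N' = N(B := 0)"
      have N'le: "N' \<le> N" by (simp add: N'_def le_fun_def)
      have "\<forall>j\<ge>B. N' j = 0" using Nz by (auto simp: N'_def)
      then have QN': "Q N'" using Suc.IH rng_down[OF N'le Nr] by blast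
      have "c \<le> N B \<longrightarrow> Q (N'(B := c))" for c
      proof (induction c)
        case 0
        have e: "N'(B := 0) = N'" unfolding N'_def by simp
        show ?case using QN' e by simp
      next
        case (Suc c)
        show ?case
        proof
          assume c: "Suc c \<le> N B"
          have le: "N'(B := c) \<le> N" using c by (simp add: N'_def le_fun_def)
          have r: "N'(B := c) \<in> range d" by (rule rng_down[OF le Nr])
          have BK: "B \<in> K" using rng_K[OF Nr, of B] c by simp
          have eq: "N'(B := Suc c) = N'(B := c) + ebasis B"
            by (simp add: fun_eq_iff ebasis_def N'_def)
          show "Q (N'(B := Suc c))" unfolding eq using st[OF r _ BK] Suc c by simp
        qed
      qed
      moreover have "N'(B := N B) = N" by (simp add: N'_def)
      ultimately show "Q N" by (metis order_refl)
    qed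
  qed
  obtain B where "\<forall>j\<in>{i. N i \<noteq> 0}. j < B"
    using rng_fin[OF N] finite_nat_set_iff_bounded by blast
  then have "\<forall>j\<ge>B. N j = 0" by (metis (mono_tags) leD mem_Collect_eq)
  then show ?thesis using main N by blast
qed

lemma Dset_0: "Dset 0 = {1}"
  using d_zero by (auto simp: Dset_def)

lemma Dset_split: "Dset (N + M) = (\<lambda>(a, b). a * b) ` (Dset N \<times> Dset M)"
proof
  show "Dset (N + M) \<subseteq> (\<lambda>(a, b). a * b) ` (Dset N \<times> Dset M)"
  proof
    fix x assume "x \<in> Dset (N + M)"
    then obtain a b where "d a = N" "d b = M" "x = a * b"
      using factor[of x N M] by (auto simp: Dset_def)
    then show "x \<in> (\<lambda>(a, b). a * b) ` (Dset N \<times> Dset M)" by (auto simp: Dset_def)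
  qed
  show "(\<lambda>(a, b). a * b) ` (Dset N \<times> Dset M) \<subseteq> Dset (N + M)"
    by (auto simp: Dset_def d_mult)
qed

lemma Dset_inj: "inj_on (\<lambda>(a, b). a * b) (Dset N \<times> Dset M)"
proof (rule inj_onI)
  fix p q assume p: "p \<in> Dset N \<times> Dset M" and q: "q \<in> Dset N \<times> Dset M"
    and eq: "(\<lambda>(a, b). a * b) p = (\<lambda>(a, b). a * b) q"
  obtain a b where ab: "p = (a, b)" by (cases p)
  obtain a' b' where ab': "q = (a', b')" by (cases q)
  have "d a = d a'" using p q ab ab' by (simp add: Dset_def)
  moreover have "a * b = a' * b'" using eq ab ab' by simp
  ultimately show "p = q" using factor_uniq ab ab' by blast
qed

lemma Dset_fin: "finite (Dset N)"
proof (cases "N \<in> range d")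
  case False
  then have "Dset N = {}" by (auto simp: Dset_def)
  then show ?thesis by simp
next
  case True
  then show ?thesis
  proof (induction rule: deg_induct)
    case zero then show ?case unfolding Dset_0 by simp
  next
    case (step N i)
    have "finite (Dset (ebasis i))" using edges[OF \<open>i \<in> K\<close>] by (simp add: Dset_def)
    then have "finite (Dset N \<times> Dset (ebasis i))" using step by simp
    then show ?case unfolding Dset_split by (rule finite_imageI)
  qed
qed

end


section \<open>Representations of the k-graph\<close>

locale kgrep = kgraph K d for K :: "nat set" and d :: "'p::monoid_mult \<Rightarrow> nat \<Rightarrow> nat" +
  fixes W :: "'p \<Rightarrow> 'b::cstar_algebra"
  assumes W_iso: "\<And>\<mu>. isometry (W \<mu>)"
    and W_one: "W 1 = 1"
    and W_mult: "\<And>\<mu> \<nu>. W (\<mu> * \<nu>) = W \<mu> * W \<nu>"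
    and W_sum: "\<And>i. i \<in> K \<Longrightarrow> (\<Sum>\<mu>\<in>{\<mu>. d \<mu> = ebasis i}. W \<mu> * cstar (W \<mu>)) = 1"
begin

definition pj :: "'p \<Rightarrow> 'b" where "pj \<rho> = W \<rho> * cstar (W \<rho>)"

lemma W_iso': "cstar (W \<mu>) * W \<mu> = 1"
  using W_iso by (simp add: isometry_def)

lemma pj_proj: "projection (pj \<rho>)"
proof -
  have "pj \<rho> * pj \<rho> = W \<rho> * (cstar (W \<rho>) * W \<rho>) * cstar (W \<rho>)"
    by (simp add: pj_def mult.assoc)
  also have "\<dots> = pj \<rho>" by (simp add: W_iso' pj_def)
  finally show ?thesis by (simp add: projection_def pj_def cstar_mult cstar_cstar)
qed

lemma pj_sa: "cstar (pj \<rho>) = pj \<rho>"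
  using pj_proj by (simp add: projection_def)

lemma pj_conj: "W \<rho> * pj \<alpha> * cstar (W \<rho>) = pj (\<rho> * \<alpha>)"
  by (simp add: pj_def W_mult cstar_mult mult.assoc)

definition PP :: "(nat \<Rightarrow> nat) \<Rightarrow> 'p set \<Rightarrow> 'b" where
  "PP N S = (\<Sum>\<rho>\<in>Dset N \<inter> S. pj \<rho>)"

lemma sum_split:
  "(\<Sum>\<sigma>\<in>Dset (N + M) \<inter> S. pj \<sigma>)
     = (\<Sum>\<rho>\<in>Dset N. W \<rho> * (\<Sum>\<alpha>\<in>Dset M \<inter> {\<alpha>. \<rho> * \<alpha> \<in> S}. pj \<alpha>) * cstar (W \<rho>))"
proof -
  define A where "A = Sigma (Dset N) (\<lambda>\<rho>. Dset M \<inter> {\<alpha>. \<rho> * \<alpha> \<in> S})"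
  have A_sub: "A \<subseteq> Dset N \<times> Dset M" by (auto simp: A_def)
  have img: "Dset (N + M) \<inter> S = (\<lambda>(a, b). a * b) ` A"
    unfolding Dset_split A_def by auto
  have inj: "inj_on (\<lambda>(a, b). a * b) A" by (rule inj_on_subset[OF Dset_inj A_sub])
  have "(\<Sum>\<sigma>\<in>Dset (N + M) \<inter> S. pj \<sigma>) = (\<Sum>x\<in>A. pj ((\<lambda>(a, b). a * b) x))"
    unfolding img by (subst sum.reindex[OF inj]) (simp add: comp_def)
  also have "\<dots> = (\<Sum>\<rho>\<in>Dset N. \<Sum>\<alpha>\<in>Dset M \<inter> {\<alpha>. \<rho> * \<alpha> \<in> S}. pj (\<rho> * \<alpha>))"
    unfolding A_def by (subst sum.Sigma) (auto simp: Dset_fin prod.case_distrib)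
  also have "\<dots> = (\<Sum>\<rho>\<in>Dset N. W \<rho> * (\<Sum>\<alpha>\<in>Dset M \<inter> {\<alpha>. \<rho> * \<alpha> \<in> S}. pj \<alpha>) * cstar (W \<rho>))"
    by (simp add: sum_distrib_left sum_distrib_right pj_conj)
  finally show ?thesis .
qed

lemma sumD: "N \<in> range d \<Longrightarrow> PP N UNIV = 1"
proof (induction rule: deg_induct)
  case zero
  show ?case unfolding PP_def Dset_0 by (simp add: pj_def W_one)
next
  case (step N i)
  have "PP (N + ebasis i) UNIV
      = (\<Sum>\<rho>\<in>Dset N. W \<rho> * (\<Sum>\<alpha>\<in>Dset (ebasis i) \<inter> {\<alpha>. \<rho> * \<alpha> \<in> UNIV}. pj \<alpha>) * cstar (W \<rho>))"
    unfolding PP_def by (rule sum_split)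
  also have "\<dots> = (\<Sum>\<rho>\<in>Dset N. pj \<rho>)"
    using W_sum[OF \<open>i \<in> K\<close>] by (simp add: Dset_def pj_def)
  also have "\<dots> = 1" using step unfolding PP_def by simp
  finally show ?case .
qed

lemma orth:
  assumes N: "N \<in> range d" and r: "\<rho> \<in> Dset N" and s: "\<sigma> \<in> Dset N" and ne: "\<rho> \<noteq> \<sigma>"
  shows "pj \<rho> * pj \<sigma> = 0"
proof -
  have "sum pj (Dset N) = 1" using sumD[OF N] by (simp add: PP_def)
  then show ?thesis using proj_sum_orth[OF Dset_fin _ _ r s ne] pj_proj by blast
qed

lemma pj_idem: "pj \<rho> * pj \<rho> = pj \<rho>"
  using pj_proj by (simp add: projection_def)

lemma PP_mult:
  assumes N: "N \<in> range d"
  shows "PP N S * PP N T = PP N (S \<inter> T)"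
proof -
  have "PP N S * PP N T = (\<Sum>\<rho>\<in>Dset N \<inter> S. \<Sum>\<sigma>\<in>Dset N \<inter> T. pj \<rho> * pj \<sigma>)"
    unfolding PP_def by (rule sum_product)
  also have "\<dots> = (\<Sum>\<rho>\<in>Dset N \<inter> S. \<Sum>\<sigma>\<in>Dset N \<inter> T. if \<rho> = \<sigma> then pj \<rho> else 0)"
    by (intro sum.cong refl) (auto simp: orth[OF N] pj_idem)
  also have "\<dots> = (\<Sum>\<rho>\<in>Dset N \<inter> S. if \<rho> \<in> Dset N \<inter> T then pj \<rho> else 0)"
    by (intro sum.cong refl) (simp add: Dset_fin)
  also have "\<dots> = PP N (S \<inter> T)"
  proof -
    have "(\<Sum>\<rho>\<in>Dset N \<inter> S. if \<rho> \<in> Dset N \<inter> T then pj \<rho> else 0)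
        = sum pj ((Dset N \<inter> S) \<inter> (Dset N \<inter> T))"
      by (rule sum.inter_restrict[symmetric]) (simp add: Dset_fin)
    also have "(Dset N \<inter> S) \<inter> (Dset N \<inter> T) = Dset N \<inter> (S \<inter> T)" by blast
    finally show ?thesis unfolding PP_def .
  qed
  finally show ?thesis .
qed

lemma PP_sa: "cstar (PP N S) = PP N S"
  by (simp add: PP_def cstar_sum pj_sa)

lemma PP_proj: "N \<in> range d \<Longrightarrow> projection (PP N S)"
  using PP_mult[of N S S] PP_sa by (simp add: projection_def)

lemma PP_empty [simp]: "PP N {} = 0"
  by (simp add: PP_def)

lemma PP_compl: "N \<in> range d \<Longrightarrow> PP N (- S) = 1 - PP N S"
proof -
  assume N: "N \<in> range d"
  have "PP N UNIV = PP N S + PP N (- S)"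
  proof -
    have "Dset N \<inter> UNIV = (Dset N \<inter> S) \<union> (Dset N \<inter> - S)" by auto
    then show ?thesis unfolding PP_def
      by (simp add: sum.union_disjoint[symmetric] Dset_fin Int_Un_distrib[symmetric])
  qed
  then show ?thesis using sumD[OF N] by (simp add: algebra_simps)
qed

definition stab :: "'p set \<Rightarrow> (nat \<Rightarrow> nat) \<Rightarrow> bool" where
  "stab S N \<longleftrightarrow> N \<in> range d \<and> (\<forall>\<rho> \<alpha>. N \<le> d \<rho> \<longrightarrow> (\<rho> * \<alpha> \<in> S \<longleftrightarrow> \<rho> \<in> S))"

lemma stab_mono: "stab S N \<Longrightarrow> N \<le> M \<Longrightarrow> M \<in> range d \<Longrightarrow> stab S M"
  unfolding stab_def using order_trans by blast

lemma stab_compl: "stab S N \<Longrightarrow> stab (- S) N"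
  unfolding stab_def by blast

lemma stab_Int: "stab S N \<Longrightarrow> stab T N \<Longrightarrow> stab (S \<inter> T) N"
  unfolding stab_def by blast

lemma stab_Union: "N \<in> range d \<Longrightarrow> (\<And>X. X \<in> F \<Longrightarrow> stab X N) \<Longrightarrow> stab (\<Union>F) N"
  unfolding stab_def by blast

lemma stab_UNIV: "N \<in> range d \<Longrightarrow> stab UNIV N"
  unfolding stab_def by blast

lemma stab_empty: "N \<in> range d \<Longrightarrow> stab {} N"
  unfolding stab_def by blast

lemma stab_common: "stab S N \<Longrightarrow> stab T M \<Longrightarrow> stab S (sup N M) \<and> stab T (sup N M)"
proof -
  assume S: "stab S N" and T: "stab T M"
  have r: "sup N M \<in> range d" using S T rng_sup by (simp add: stab_def)
  show ?thesis using stab_mono[OF S _ r] stab_mono[OF T _ r] by simp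
qed

lemma PP_step:
  assumes S: "stab S N" and le: "N \<le> M" and M: "M \<in> range d" and i: "i \<in> K"
  shows "PP (M + ebasis i) S = PP M S"
proof -
  have "PP (M + ebasis i) S
      = (\<Sum>\<rho>\<in>Dset M. W \<rho> * (\<Sum>\<alpha>\<in>Dset (ebasis i) \<inter> {\<alpha>. \<rho> * \<alpha> \<in> S}. pj \<alpha>) * cstar (W \<rho>))"
    unfolding PP_def by (rule sum_split)
  also have "\<dots> = (\<Sum>\<rho>\<in>Dset M. if \<rho> \<in> S then pj \<rho> else 0)"
  proof (intro sum.cong refl)
    fix \<rho> assume r: "\<rho> \<in> Dset M"
    have iff: "\<rho> * \<alpha> \<in> S \<longleftrightarrow> \<rho> \<in> S" for \<alpha>
      using S le r unfolding stab_def Dset_def by auto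
    show "W \<rho> * (\<Sum>\<alpha>\<in>Dset (ebasis i) \<inter> {\<alpha>. \<rho> * \<alpha> \<in> S}. pj \<alpha>) * cstar (W \<rho>)
        = (if \<rho> \<in> S then pj \<rho> else 0)"
    proof (cases "\<rho> \<in> S")
      case True
      then have "Dset (ebasis i) \<inter> {\<alpha>. \<rho> * \<alpha> \<in> S} = {\<mu>. d \<mu> = ebasis i}"
        using iff by (auto simp: Dset_def)
      then show ?thesis using True W_sum[OF i] by (simp add: pj_def)
    next
      case False
      then have "Dset (ebasis i) \<inter> {\<alpha>. \<rho> * \<alpha> \<in> S} = {}" using iff by auto
      then show ?thesis using False by simp
    qed
  qed
  also have "\<dots> = PP M S"
    unfolding PP_def by (simp add: sum.inter_restrict Dset_fin)
  finally show ?thesis .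
qed

lemma PP_mono:
  assumes S: "stab S N" and le: "N \<le> M" and M: "M \<in> range d"
  shows "PP M S = PP N S"
proof -
  have N: "N \<in> range d" using S by (simp add: stab_def)
  have "M - N \<in> range d" by (rule rng_down[OF _ M]) (simp add: le_fun_def)
  then have "PP (N + (M - N)) S = PP N S"
  proof (induction rule: deg_induct)
    case zero then show ?case by simp
  next
    case (step D i)
    have r: "N + D \<in> range d" by (rule rng_add[OF N step(1)])
    have le2: "N \<le> N + D" by (simp add: le_fun_def)
    have "PP (N + (D + ebasis i)) S = PP ((N + D) + ebasis i) S" by (simp only: add.assoc)
    also have "\<dots> = PP (N + D) S" by (rule PP_step[OF S le2 r \<open>i \<in> K\<close>])
    also have "\<dots> = PP N S" by (simp only: step)
    finally show ?case .
  qed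
  moreover have "N + (M - N) = M" using le by (simp add: fun_eq_iff le_fun_def)
  ultimately show ?thesis by simp
qed

definition Efun :: "'p set \<Rightarrow> 'b" where
  "Efun S = PP (SOME N. stab S N) S"

lemma Efun_eq:
  assumes S: "stab S N" shows "Efun S = PP N S"
proof -
  define N0 where "N0 = (SOME N. stab S N)"
  have S0: "stab S N0" unfolding N0_def using someI[where P="\<lambda>N. stab S N", OF S] .
  have r: "sup N0 N \<in> range d" using S S0 rng_sup by (simp add: stab_def)
  have "PP (sup N0 N) S = PP N0 S" by (rule PP_mono[OF S0 _ r]) simp
  moreover have "PP (sup N0 N) S = PP N S" by (rule PP_mono[OF S _ r]) simp
  ultimately show ?thesis by (simp add: Efun_def N0_def)
qed

lemma Efun_proj: "stab S N \<Longrightarrow> projection (Efun S)"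
  using Efun_eq PP_proj by (simp add: stab_def)

lemma Efun_Int: "stab S N \<Longrightarrow> stab T M \<Longrightarrow> Efun (S \<inter> T) = Efun S * Efun T"
proof -
  assume S: "stab S N" and T: "stab T M"
  define L where "L = sup N M"
  have SL: "stab S L" and TL: "stab T L" using stab_common[OF S T] by (auto simp: L_def)
  have L: "L \<in> range d" using SL by (simp add: stab_def)
  show ?thesis using Efun_eq[OF SL] Efun_eq[OF TL] Efun_eq[OF stab_Int[OF SL TL]] PP_mult[OF L]
    by simp
qed

lemma Efun_Un: "stab S N \<Longrightarrow> stab T M \<Longrightarrow> 1 - Efun (S \<union> T) = (1 - Efun S) * (1 - Efun T)"
proof -
  assume S: "stab S N" and T: "stab T M"
  define L where "L = sup N M"
  have SL: "stab S L" and TL: "stab T L" using stab_common[OF S T] by (auto simp: L_def)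
  have L: "L \<in> range d" using SL by (simp add: stab_def)
  have U: "stab (S \<union> T) L" using stab_Union[OF L, of "{S, T}"] SL TL by auto
  have "1 - Efun (S \<union> T) = PP L (- (S \<union> T))" by (simp only: Efun_eq[OF U] PP_compl[OF L])
  also have "\<dots> = PP L (- S) * PP L (- T)" using PP_mult[OF L] by (simp add: Compl_Un)
  also have "\<dots> = (1 - Efun S) * (1 - Efun T)"
    using Efun_eq[OF SL] Efun_eq[OF TL] PP_compl[OF L] by simp
  finally show ?thesis .
qed

definition prin :: "'p \<Rightarrow> 'p set" where "prin l = {\<sigma>. \<exists>a. \<sigma> = l * a}"

lemma stab_prin: "stab (prin l) (d l)"
proof -
  have "\<rho> * \<alpha> \<in> prin l \<longleftrightarrow> \<rho> \<in> prin l" if "d l \<le> d \<rho>" for \<rho> \<alpha>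
    using prefix[OF that] by (auto simp: prin_def mult.assoc)
  then show ?thesis by (simp add: stab_def)
qed

lemma Efun_prin: "Efun (prin l) = pj l"
proof -
  have "Dset (d l) \<inter> prin l = {l}"
  proof
    show "Dset (d l) \<inter> prin l \<subseteq> {l}"
    proof
      fix \<sigma> assume "\<sigma> \<in> Dset (d l) \<inter> prin l"
      then obtain a where a: "\<sigma> = l * a" "d \<sigma> = d l" by (auto simp: Dset_def prin_def)
      then have "d a = 0" by (simp add: d_mult fun_eq_iff)
      then have "a = 1" by (rule d_zero)
      then show "\<sigma> \<in> {l}" using a by simp
    qed
    show "{l} \<subseteq> Dset (d l) \<inter> prin l" by (auto simp: Dset_def prin_def intro: exI[of _ 1])
  qed
  then show ?thesis using Efun_eq[OF stab_prin] by (simp add: PP_def)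
qed

lemma stab_pre:
  assumes S: "stab S N" shows "stab {a. \<nu> * a \<in> S} N"
proof -
  have "\<rho> * \<alpha> \<in> {a. \<nu> * a \<in> S} \<longleftrightarrow> \<rho> \<in> {a. \<nu> * a \<in> S}" if le: "N \<le> d \<rho>" for \<rho> \<alpha>
  proof -
    have "d \<rho> \<le> d (\<nu> * \<rho>)" by (simp add: d_mult le_fun_def)
    then have le2: "N \<le> d (\<nu> * \<rho>)" using le by (rule order_trans[rotated])
    have "\<nu> * \<rho> * \<alpha> \<in> S \<longleftrightarrow> \<nu> * \<rho> \<in> S" using S le2 by (simp add: stab_def)
    then show ?thesis by (simp add: mult.assoc)
  qed
  then show ?thesis using S by (simp add: stab_def)
qed

lemma stab_img:
  assumes S: "stab S N"
  shows "stab ((*) \<nu> ` S) (d \<nu> + N)"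
proof -
  have N: "N \<in> range d" using S by (simp add: stab_def)
  have r: "d \<nu> + N \<in> range d" by (rule rng_add[OF _ N]) simp
  have "\<rho> * \<alpha> \<in> (*) \<nu> ` S \<longleftrightarrow> \<rho> \<in> (*) \<nu> ` S" if le: "d \<nu> + N \<le> d \<rho>" for \<rho> \<alpha>
  proof
    have "d \<nu> \<le> d \<nu> + N" by (simp add: le_fun_def)
    then have le1: "d \<nu> \<le> d \<rho>" using le by (rule order_trans)
    assume "\<rho> * \<alpha> \<in> (*) \<nu> ` S"
    then obtain s where s: "s \<in> S" "\<rho> * \<alpha> = \<nu> * s" by auto
    obtain r where rr: "\<rho> = \<nu> * r" using prefix[OF le1 s(2)] by auto
    have "d \<nu> + N \<le> d \<nu> + d r" using le rr by (simp add: d_mult)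
    then have le3: "N \<le> d r" by (simp add: le_fun_def)
    have "r * \<alpha> = s" using s(2) rr lcancel by (simp add: mult.assoc)
    moreover have "r * \<alpha> \<in> S \<longleftrightarrow> r \<in> S" using S le3 by (simp add: stab_def)
    ultimately have "r \<in> S" using s(1) by simp
    then show "\<rho> \<in> (*) \<nu> ` S" using rr by auto
  next
    assume "\<rho> \<in> (*) \<nu> ` S"
    then obtain r where rr: "r \<in> S" "\<rho> = \<nu> * r" by auto
    have "d \<nu> + N \<le> d \<nu> + d r" using le rr by (simp add: d_mult)
    then have le3: "N \<le> d r" by (simp add: le_fun_def)
    have "r * \<alpha> \<in> S" using S le3 rr(1) by (simp add: stab_def)
    then show "\<rho> * \<alpha> \<in> (*) \<nu> ` S" using rr by (auto simp: mult.assoc)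
  qed
  then show ?thesis using r by (simp add: stab_def)
qed

lemma Efun_img:
  assumes S: "stab S N"
  shows "Efun ((*) \<nu> ` S) = W \<nu> * Efun S * cstar (W \<nu>)"
proof -
  have "Efun ((*) \<nu> ` S) = PP (d \<nu> + N) ((*) \<nu> ` S)" by (rule Efun_eq[OF stab_img[OF S]])
  also have "\<dots> = (\<Sum>\<rho>\<in>Dset (d \<nu>). W \<rho> * (\<Sum>\<alpha>\<in>Dset N \<inter> {\<alpha>. \<rho> * \<alpha> \<in> (*) \<nu> ` S}. pj \<alpha>) * cstar (W \<rho>))"
    unfolding PP_def by (rule sum_split)
  also have "\<dots> = (\<Sum>\<rho>\<in>Dset (d \<nu>). if \<rho> = \<nu> then W \<nu> * PP N S * cstar (W \<nu>) else 0)"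
  proof (intro sum.cong refl)
    fix \<rho> assume r: "\<rho> \<in> Dset (d \<nu>)"
    show "W \<rho> * (\<Sum>\<alpha>\<in>Dset N \<inter> {\<alpha>. \<rho> * \<alpha> \<in> (*) \<nu> ` S}. pj \<alpha>) * cstar (W \<rho>)
        = (if \<rho> = \<nu> then W \<nu> * PP N S * cstar (W \<nu>) else 0)"
    proof (cases "\<rho> = \<nu>")
      case True
      have "\<nu> * \<alpha> \<in> (*) \<nu> ` S \<longleftrightarrow> \<alpha> \<in> S" for \<alpha>
      proof
        assume "\<nu> * \<alpha> \<in> (*) \<nu> ` S"
        then obtain s where "s \<in> S" "\<nu> * \<alpha> = \<nu> * s" by auto
        then show "\<alpha> \<in> S" using lcancel by metis
      qed auto
      then have "Dset N \<inter> {\<alpha>. \<nu> * \<alpha> \<in> (*) \<nu> ` S} = Dset N \<inter> S" by auto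
      then show ?thesis using True by (simp add: PP_def)
    next
      case False
      have "\<rho> * \<alpha> \<noteq> \<nu> * s" for \<alpha> s
      proof
        assume "\<rho> * \<alpha> = \<nu> * s"
        moreover have "d \<rho> = d \<nu>" using r by (simp add: Dset_def)
        ultimately have "\<rho> = \<nu>" using factor_uniq by blast
        then show False using False by simp
      qed
      then have "{\<alpha>. \<rho> * \<alpha> \<in> (*) \<nu> ` S} = {}" by auto
      then show ?thesis using False by simp
    qed
  qed
  also have "\<dots> = W \<nu> * PP N S * cstar (W \<nu>)"
  proof -
    have "\<nu> \<in> Dset (d \<nu>)" by (simp add: Dset_def)
    then show ?thesis by (simp add: sum.delta[OF Dset_fin])
  qed
  also have "\<dots> = W \<nu> * Efun S * cstar (W \<nu>)" using Efun_eq[OF S] by simp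
  finally show ?thesis .
qed

definition genI :: "'p list \<Rightarrow> 'p set" where "genI xs = \<Union> (prin ` set xs)"

lemma d_prod_list: "l \<in> set xs \<Longrightarrow> d l \<le> d (prod_list xs)"
proof (induction xs)
  case (Cons x xs)
  then show ?case by (auto simp: d_mult le_fun_def intro: add_increasing)
qed simp

lemma stab_genI: "stab (genI xs) (d (prod_list xs))"
  unfolding genI_def
proof (rule stab_Union)
  show "d (prod_list xs) \<in> range d" by simp
  fix X assume "X \<in> prin ` set xs"
  then obtain l where l: "l \<in> set xs" "X = prin l" by auto
  show "stab X (d (prod_list xs))"
    using stab_mono[OF stab_prin d_prod_list[OF l(1)]] l by simp
qed

lemma genI_Cons: "genI (x # xs) = prin x \<union> genI xs"
  by (simp add: genI_def)

lemma Efun_genI: "Efun (genI xs) = 1 - prod_list (map (\<lambda>l. 1 - pj l) xs)"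
proof (induction xs)
  case Nil
  have "genI [] = {}" by (simp add: genI_def)
  then show ?case using Efun_eq[OF stab_empty[OF rng_0]] by simp
next
  case (Cons x xs)
  have "1 - Efun (genI (x # xs)) = (1 - Efun (prin x)) * (1 - Efun (genI xs))"
    unfolding genI_Cons by (rule Efun_Un[OF stab_prin stab_genI])
  then show ?case using Cons by (simp add: Efun_prin algebra_simps)
qed

end


section \<open>Zappa-Szep products\<close>

locale zsl =
  fixes act :: "'g::group_add \<Rightarrow> 'p::monoid_mult \<Rightarrow> 'p" and restr :: "'g \<Rightarrow> 'p \<Rightarrow> 'g"
  assumes zs: "zappa_szep act restr"
begin

lemma act0 [simp]: "act 0 u = u" using zs by (simp add: zappa_szep_def)
lemma act_add: "act (a + b) u = act a (act b u)" using zs by (simp add: zappa_szep_def)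
lemma act_one [simp]: "act a 1 = 1" using zs by (simp add: zappa_szep_def)
lemma act_mult: "act a (u * v) = act a u * act (restr a u) v" using zs by (simp add: zappa_szep_def)
lemma restr_one [simp]: "restr a 1 = a" using zs by (simp add: zappa_szep_def)
lemma restr_mult: "restr a (u * v) = restr (restr a u) v" using zs by (simp add: zappa_szep_def)
lemma restr0 [simp]: "restr 0 u = 0" using zs by (simp add: zappa_szep_def)
lemma restr_add: "restr (a + b) u = restr a (act b u) + restr b u" using zs by (simp add: zappa_szep_def)

lemma act_inv1 [simp]: "act (- g) (act g u) = u"
  using act_add[of "- g" g u] by simp

lemma act_inv2 [simp]: "act g (act (- g) u) = u"
  using act_add[of g "- g" u] by simp

abbreviation m where "m \<equiv> zs_mult act restr"

lemma m_simp: "m (u, a) (v, b) = (u * act a v, restr a v + b)"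
  by (simp add: zs_mult_def)

lemma m_assoc: "m (m x y) z = m x (m y z)"
proof -
  obtain u a where x: "x = (u, a)" by (cases x)
  obtain v b where y: "y = (v, b)" by (cases y)
  obtain w c where z: "z = (w, c)" by (cases z)
  show ?thesis unfolding x y z
    by (simp add: m_simp act_mult restr_mult act_add restr_add mult.assoc add.assoc)
qed

lemma m_e_left [simp]: "m (1, 0) y = y"
  by (cases y) (simp add: m_simp)

lemma m_e_right [simp]: "m y (1, 0) = y"
  by (cases y) (simp add: m_simp)

lemma m_split: "m (\<mu>, 0) (1, g) = (\<mu>, g)"
  by (simp add: m_simp)

lemma m_U: "m (1, g) (1, h) = (1, g + h)"
  by (simp add: m_simp)

lemma m_W: "m (\<mu>, 0) (\<nu>, 0) = (\<mu> * \<nu>, 0)"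
  by (simp add: m_simp)

lemma m_cov1: "m (1, g) (\<mu>, 0) = (act g \<mu>, restr g \<mu>)"
  by (simp add: m_simp)

lemma m_cov2: "m (act g \<mu>, 0) (1, restr g \<mu>) = (act g \<mu>, restr g \<mu>)"
  by (simp add: m_simp)

lemma cword_rideal: "x \<in> cword m ps \<Longrightarrow> m x z \<in> cword m ps"
proof (induction ps arbitrary: x z)
  case Nil then show ?case by simp
next
  case (Cons pq ps)
  from Cons.prems obtain c where c: "c \<in> cword m ps" "m (fst pq) x = m (snd pq) c" by auto
  have "m (fst pq) (m x z) = m (snd pq) (m c z)" using c(2) by (simp flip: m_assoc)
  moreover have "m c z \<in> cword m ps" by (rule Cons.IH[OF c(1)])
  ultimately show ?case by auto
qed

lemma cword_UNIV: "cword m [((1, 0), (1, 0))] = UNIV"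
  by auto

lemma cword_constr: "cword m ps \<in> constructible m"
proof (cases "ps = []")
  case True
  then show ?thesis unfolding constructible_def
    using cword_UNIV by (auto intro!: exI[of _ "[((1, 0), (1, 0))]"])
next
  case False
  then show ?thesis unfolding constructible_def by auto
qed

lemma cword_img: "cword m (((1, 0), q) # ps) = m q ` cword m ps"
  by auto

lemma cword_range: "cword m [((1, 0), p)] = range (m p)"
  by auto

lemma br_V_one:
  assumes br: "boundary_rep m V E" shows "V (1, 0) = 1"
proof -
  have iso: "cstar (V (1, 0)) * V (1, 0) = 1" using br by (simp add: boundary_rep_def isometry_def)
  have "V (1, 0) = V (1, 0) * V (1, 0)" using br m_e_left[of "(1, 0)"]
    unfolding boundary_rep_def by metis
  then have "cstar (V (1, 0)) * V (1, 0) = cstar (V (1, 0)) * (V (1, 0) * V (1, 0))" by simp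
  then show ?thesis using iso by (simp flip: mult.assoc)
qed

lemma br_E_cons:
  assumes br: "boundary_rep m V E"
  shows "E (cword m ((p, q) # ps)) = cstar (V p) * V q * E (cword m ps) * cstar (V q) * V p"
proof -
  have iso: "\<And>p. cstar (V p) * V p = 1" using br unfolding boundary_rep_def isometry_def by blast
  have conj: "\<And>p X. X \<in> constructible m \<Longrightarrow> V p * E X * cstar (V p) = E (m p ` X)"
    using br unfolding boundary_rep_def by blast
  have int: "\<And>X Y. X \<in> constructible m \<Longrightarrow> Y \<in> constructible m \<Longrightarrow> E X * E Y = E (X \<inter> Y)"
    using br unfolding boundary_rep_def by blast
  have EU: "E UNIV = 1" using br by (simp add: boundary_rep_def)
  define C where "C = cword m ps"
  define Y where "Y = m q ` C"
  define X where "X = cword m ((p, q) # ps)"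
  define R where "R = range (m p)"
  have C: "C \<in> constructible m" unfolding C_def by (rule cword_constr)
  have Yc: "Y \<in> constructible m" using cword_constr[of "((1, 0), q) # ps"]
    by (simp only: cword_img Y_def C_def)
  have Xc: "X \<in> constructible m" unfolding X_def by (rule cword_constr)
  have Rc: "R \<in> constructible m" using cword_constr[of "[((1, 0), p)]"]
    by (simp only: cword_range R_def)
  have Uc: "UNIV \<in> constructible m" using cword_constr[of "[]"] by simp
  have img: "m p ` X = Y \<inter> R" by (auto simp: X_def Y_def C_def R_def)
  have ER: "E R = V p * cstar (V p)" using conj[OF Uc, of p] EU by (simp add: R_def)
  have EY: "E Y = V q * E C * cstar (V q)" using conj[OF C, of q] by (simp add: Y_def)
  have "V p * E X * cstar (V p) = E Y * (V p * cstar (V p))"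
    using conj[OF Xc, of p] img int[OF Yc Rc] ER by simp
  then have "cstar (V p) * (V p * E X * cstar (V p)) * V p
      = cstar (V p) * (E Y * (V p * cstar (V p))) * V p" by simp
  then have "E X = cstar (V p) * E Y * V p"
    by (simp add: mult.assoc iso) (simp add: iso flip: mult.assoc)
  then show ?thesis by (simp add: X_def EY C_def mult.assoc)
qed

lemma part3:
  assumes br: "boundary_rep m V E" and br': "boundary_rep m V' E'"
    and h1: "\<forall>\<mu>. V (\<mu>, 0) = V' (\<mu>, 0)" and h2: "\<forall>g. V (1, g) = V' (1, g)"
  shows "(\<forall>p. V p = V' p) \<and> (\<forall>X\<in>constructible m. E X = E' X)"
proof -
  have VV: "V p = V' p" for p
  proof -
    obtain \<mu> g where p: "p = (\<mu>, g)" by (cases p)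
    have "V p = V (\<mu>, 0) * V (1, g)" using br m_split[of \<mu> g] unfolding p boundary_rep_def by metis
    moreover have "V' p = V' (\<mu>, 0) * V' (1, g)" using br' m_split[of \<mu> g] unfolding p boundary_rep_def by metis
    ultimately show ?thesis using h1 h2 by simp
  qed
  have EE: "E (cword m ps) = E' (cword m ps)" for ps
  proof (induction ps)
    case Nil
    have "E UNIV = 1" "E' UNIV = 1" using br br' by (auto simp: boundary_rep_def)
    then show ?case by simp
  next
    case (Cons pq ps)
    obtain p q where pq: "pq = (p, q)" by (cases pq)
    show ?case unfolding pq br_E_cons[OF br] br_E_cons[OF br'] using Cons VV by simp
  qed
  have "E X = E' X" if "X \<in> constructible m" for X
  proof -
    have "X = {} \<or> (\<exists>ps. X = cword m ps)" using that by (auto simp: constructible_def)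
    moreover have "E {} = 0" "E' {} = 0" using br br' by (auto simp: boundary_rep_def)
    ultimately show ?thesis using EE by auto
  qed
  then show ?thesis using VV by blast
qed

end


section \<open>From boundary representations to covariant representations\<close>

locale kzs = kgraph K d + zsl act restr
  for K :: "nat set" and d :: "'p::monoid_mult \<Rightarrow> nat \<Rightarrow> nat"
  and act :: "'g::group_add \<Rightarrow> 'p \<Rightarrow> 'p" and restr :: "'g \<Rightarrow> 'p \<Rightarrow> 'g"
begin

lemma orth_prod_list:
  fixes q :: "'a \<Rightarrow> 'b::cstar_algebra"
  assumes "distinct ls" and "\<And>x y. x \<in> set ls \<Longrightarrow> y \<in> set ls \<Longrightarrow> x \<noteq> y \<Longrightarrow> q x * q y = 0"
  shows "prod_list (map (\<lambda>x. 1 - q x) ls) = 1 - (\<Sum>x\<in>set ls. q x)"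
  using assms
proof (induction ls)
  case Nil then show ?case by simp
next
  case (Cons x ls)
  have IH: "prod_list (map (\<lambda>x. 1 - q x) ls) = 1 - (\<Sum>x\<in>set ls. q x)"
    using Cons by auto
  have z: "q x * (\<Sum>y\<in>set ls. q y) = 0"
    using Cons.prems by (auto simp: sum_distrib_left intro!: sum.neutral)
  have "prod_list (map (\<lambda>x. 1 - q x) (x # ls)) = (1 - q x) * (1 - (\<Sum>x\<in>set ls. q x))"
    using IH by simp
  also have "\<dots> = 1 - q x - (\<Sum>x\<in>set ls. q x) + q x * (\<Sum>y\<in>set ls. q y)"
    by (simp add: algebra_simps)
  also have "\<dots> = 1 - (\<Sum>x\<in>set (x # ls). q x)" using z Cons.prems by simp
  finally show ?case .
qed

lemma part1:
  assumes br: "boundary_rep m V E"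
  shows "covariant_rep K d act restr (\<lambda>g. V (1, g)) (\<lambda>\<mu>. V (\<mu>, 0))"
proof -
  have iso: "\<And>p. cstar (V p) * V p = 1" using br unfolding boundary_rep_def isometry_def by blast
  have Vm: "\<And>p q. V (m p q) = V p * V q" using br unfolding boundary_rep_def by blast
  have conj: "\<And>p X. X \<in> constructible m \<Longrightarrow> V p * E X * cstar (V p) = E (m p ` X)"
    using br unfolding boundary_rep_def by blast
  have int: "\<And>X Y. X \<in> constructible m \<Longrightarrow> Y \<in> constructible m \<Longrightarrow> E X * E Y = E (X \<inter> Y)"
    using br unfolding boundary_rep_def by blast
  have EU: "E UNIV = 1" and E0: "E {} = 0" using br by (auto simp: boundary_rep_def)
  have found: "\<And>F xs. foundation_set m F \<Longrightarrow> distinct xs \<Longrightarrow> set xs = F \<Longrightarrow> prod_list (map (\<lambda>X. 1 - E X) xs) = 0"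
    using br unfolding boundary_rep_def by blast
  have V1: "V (1, 0) = 1" by (rule br_V_one[OF br])
  have Uinv: "V (1, g) * V (1, - g) = 1" for g
    using Vm[of "(1, g)" "(1, - g)"] V1 by (simp add: m_U)
  have Ustar: "cstar (V (1, g)) = V (1, - g)" for g
  proof -
    have "cstar (V (1, g)) = cstar (V (1, g)) * (V (1, g) * V (1, - g))" using Uinv by simp
    also have "\<dots> = V (1, - g)" using iso by (simp flip: mult.assoc)
    finally show ?thesis .
  qed
  have unit: "unitary (V (1, g))" for g
    using iso[of "(1, g)"] Uinv[of g] Ustar[of g] by (simp add: unitary_def)
  have Uadd: "V (1, g + h) = V (1, g) * V (1, h)" for g h
    using Vm[of "(1, g)" "(1, h)"] by (simp add: m_U)
  have Wm: "V (\<mu> * \<nu>, 0) = V (\<mu>, 0) * V (\<nu>, 0)" for \<mu> \<nu>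
    using Vm[of "(\<mu>, 0)" "(\<nu>, 0)"] by (simp add: m_W)
  have cov: "V (1, g) * V (\<mu>, 0) = V (act g \<mu>, 0) * V (1, restr g \<mu>)" for g \<mu>
    using Vm[of "(1, g)" "(\<mu>, 0)"] Vm[of "(act g \<mu>, 0)" "(1, restr g \<mu>)"]
    by (simp add: m_cov1 m_cov2)
  have Uc: "UNIV \<in> constructible m" using cword_constr[of "[]"] by simp
  have sumrel: "(\<Sum>\<mu>\<in>{\<mu>. d \<mu> = ebasis i}. V (\<mu>, 0) * cstar (V (\<mu>, 0))) = 1" if i: "i \<in> K" for i
  proof -
    define D where "D = {\<mu>. d \<mu> = ebasis i}"
    have Dfin: "finite D" and Dne: "D \<noteq> {}" using edges[OF i] by (auto simp: D_def)
    obtain ls where ls: "distinct ls" "set ls = D" using finite_distinct_list[OF Dfin] by blast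
    define P where "P \<mu> = m (\<mu>, 0) ` UNIV" for \<mu>
    have Pc: "P \<mu> \<in> constructible m" for \<mu>
      using cword_constr[of "[((1, 0), (\<mu>, 0))]"] by (simp only: cword_range P_def)
    have EP: "E (P \<mu>) = V (\<mu>, 0) * cstar (V (\<mu>, 0))" for \<mu>
      using conj[OF Uc, of "(\<mu>, 0)"] EU by (simp add: P_def)
    have Pdisj: "P \<mu> \<inter> P \<mu>' = {}" if "\<mu> \<in> D" "\<mu>' \<in> D" "\<mu> \<noteq> \<mu>'" for \<mu> \<mu>'
    proof -
      have "\<mu> * a \<noteq> \<mu>' * b" for a b
      proof
        assume "\<mu> * a = \<mu>' * b"
        moreover have "d \<mu> = d \<mu>'" using that by (simp add: D_def)
        ultimately have "\<mu> = \<mu>'" using factor_uniq by blast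
        then show False using that by simp
      qed
      then show ?thesis by (auto simp: P_def m_simp) (metis)
    qed
    have Pinj: "inj_on P D"
    proof (rule inj_onI)
      fix \<mu> \<mu>' assume "\<mu> \<in> D" "\<mu>' \<in> D" "P \<mu> = P \<mu>'"
      moreover have "(\<mu>, 0) \<in> P \<mu>" unfolding P_def using m_e_right[of "(\<mu>, 0)"] by (metis rangeI)
      ultimately show "\<mu> = \<mu>'" using Pdisj by blast
    qed
    define F where "F = P ` D"
    have fs: "foundation_set m F"
      unfolding foundation_set_def
    proof (intro conjI ballI impI)
      show "finite F" using Dfin by (simp add: F_def)
      show "F \<subseteq> constructible m" using Pc by (auto simp: F_def)
      fix Y assume Yc: "Y \<in> constructible m" and Yne: "Y \<noteq> {}"
      then obtain ps where Y: "Y = cword m ps" by (auto simp: constructible_def)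
      obtain y where y: "y \<in> Y" using Yne by auto
      obtain \<nu> g where yy: "y = (\<nu>, g)" by (cases y)
      obtain \<mu>0 where \<mu>0: "\<mu>0 \<in> D" using Dne by auto
      define z where "z = (act (- g) \<mu>0, 0::'g)"
      have mz: "m y z = (\<nu> * \<mu>0, restr g (act (- g) \<mu>0))" by (simp add: yy z_def m_simp)
      have "d (\<nu> * \<mu>0) = ebasis i + d \<nu>" using \<mu>0 by (simp add: D_def d_mult add.commute)
      then obtain \<mu> \<rho> where mr: "d \<mu> = ebasis i" "\<nu> * \<mu>0 = \<mu> * \<rho>" using factor by blast
      have "m y z = m (\<mu>, 0) (\<rho>, restr g (act (- g) \<mu>0))" using mz mr by (simp add: m_simp)
      then have "m y z \<in> P \<mu>" by (simp add: P_def)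
      moreover have "m y z \<in> Y" using cword_rideal y Y by blast
      moreover have "P \<mu> \<in> F" using mr by (simp add: F_def D_def)
      ultimately show "\<exists>X\<in>F. X \<inter> Y \<noteq> {}" by blast
    qed
    have dxs: "distinct (map P ls)" using ls Pinj by (simp add: distinct_map)
    have "prod_list (map (\<lambda>X. 1 - E X) (map P ls)) = 0"
      by (rule found[OF fs dxs]) (simp add: F_def ls)
    then have "prod_list (map (\<lambda>\<mu>. 1 - V (\<mu>, 0) * cstar (V (\<mu>, 0))) ls) = 0"
      by (simp add: comp_def EP)
    moreover have "prod_list (map (\<lambda>\<mu>. 1 - V (\<mu>, 0) * cstar (V (\<mu>, 0))) ls)
        = 1 - (\<Sum>\<mu>\<in>set ls. V (\<mu>, 0) * cstar (V (\<mu>, 0)))"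
    proof (rule orth_prod_list[OF ls(1)])
      fix x y assume "x \<in> set ls" "y \<in> set ls" "x \<noteq> y"
      then have "E (P x) * E (P y) = 0" using int[OF Pc Pc] Pdisj ls E0 by simp
      then show "V (x, 0) * cstar (V (x, 0)) * (V (y, 0) * cstar (V (y, 0))) = 0" by (simp add: EP)
    qed
    ultimately show ?thesis using ls by (simp add: D_def)
  qed
  show ?thesis unfolding covariant_rep_def
    using unit Uadd iso V1 Wm sumrel cov by (simp add: isometry_def)
qed

end


section \<open>From covariant representations to boundary representations\<close>

locale covrep = kzs K d act restr
  for K :: "nat set" and d :: "'p::monoid_mult \<Rightarrow> nat \<Rightarrow> nat"
  and act :: "'g::group_add \<Rightarrow> 'p \<Rightarrow> 'p" and restr :: "'g \<Rightarrow> 'p \<Rightarrow> 'g" +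
  fixes U :: "'g \<Rightarrow> 'b::cstar_algebra" and W :: "'p \<Rightarrow> 'b"
  assumes cov: "covariant_rep K d act restr U W"
begin

sublocale kgrep K d W
  using cov unfolding covariant_rep_def by unfold_locales auto

lemma U_unit1: "cstar (U g) * U g = 1" and U_unit2: "U g * cstar (U g) = 1"
  using cov by (auto simp: covariant_rep_def unitary_def)

lemma U_add: "U (g + h) = U g * U h"
  using cov by (simp add: covariant_rep_def)

lemma U_zero: "U 0 = 1"
proof -
  have "U 0 = U 0 * U 0" using U_add[of 0 0] by simp
  then have "cstar (U 0) * U 0 = cstar (U 0) * (U 0 * U 0)" by simp
  then show ?thesis using U_unit1[of 0] by (simp flip: mult.assoc)
qed

lemma covr: "U g * W \<mu> = W (act g \<mu>) * U (restr g \<mu>)"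
  using cov by (simp add: covariant_rep_def)

lemma U_pj: "U g * pj l * cstar (U g) = pj (act g l)"
proof -
  have "U g * pj l * cstar (U g) = (U g * W l) * cstar (U g * W l)"
    by (simp add: pj_def cstar_mult mult.assoc)
  also have "\<dots> = W (act g l) * (U (restr g l) * cstar (U (restr g l))) * cstar (W (act g l))"
    by (simp add: covr cstar_mult mult.assoc)
  also have "\<dots> = pj (act g l)" by (simp add: U_unit2 pj_def)
  finally show ?thesis .
qed

lemma U_conj_prod:
  "U g * prod_list xs * cstar (U g) = prod_list (map (\<lambda>x. U g * x * cstar (U g)) xs)"
proof (induction xs)
  case Nil then show ?case by (simp add: U_unit2)
next
  case (Cons x xs)
  have "U g * prod_list (x # xs) * cstar (U g) = (U g * x * cstar (U g)) * (U g * prod_list xs * cstar (U g))"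
    by (simp add: mult.assoc) (simp add: U_unit1 flip: mult.assoc)
  then show ?case using Cons by simp
qed

lemma act_prin: "act g ` prin l = prin (act g l)"
proof
  show "act g ` prin l \<subseteq> prin (act g l)"
    by (auto simp: prin_def act_mult)
  show "prin (act g l) \<subseteq> act g ` prin l"
  proof
    fix x assume "x \<in> prin (act g l)"
    then obtain b where b: "x = act g l * b" by (auto simp: prin_def)
    have "act g (l * act (- restr g l) b) = x" by (simp add: act_mult b)
    then show "x \<in> act g ` prin l" by (auto simp: prin_def)
  qed
qed

lemma act_genI: "act g ` genI xs = genI (map (act g) xs)"
  by (auto simp: genI_def image_UN act_prin)

lemma mul_prin: "(*) \<nu> ` prin l = prin (\<nu> * l)"
  by (auto simp: prin_def mult.assoc)

lemma mul_genI: "(*) \<nu> ` genI xs = genI (map ((*) \<nu>) xs)"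
  by (auto simp: genI_def image_UN mul_prin)

lemma U_conj_compl: "U g * (1 - pj l) * cstar (U g) = 1 - pj (act g l)"
proof -
  have "U g * (1 - pj l) * cstar (U g) = U g * cstar (U g) - U g * pj l * cstar (U g)"
    by (simp only: right_diff_distrib left_diff_distrib mult_1_right)
  then show ?thesis by (simp only: U_unit2 U_pj)
qed

lemma Efun_act: "Efun (genI (map (act g) xs)) = U g * Efun (genI xs) * cstar (U g)"
proof -
  have "U g * Efun (genI xs) * cstar (U g) = U g * (1 - prod_list (map (\<lambda>l. 1 - pj l) xs)) * cstar (U g)"
    by (simp only: Efun_genI)
  also have "\<dots> = U g * cstar (U g) - U g * prod_list (map (\<lambda>l. 1 - pj l) xs) * cstar (U g)"
    by (simp only: right_diff_distrib left_diff_distrib mult_1_right)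
  also have "\<dots> = 1 - prod_list (map (\<lambda>x. U g * x * cstar (U g)) (map (\<lambda>l. 1 - pj l) xs))"
    by (simp only: U_unit2 U_conj_prod)
  also have "\<dots> = 1 - prod_list (map (\<lambda>l. 1 - pj (act g l)) xs)"
    by (simp add: comp_def U_conj_compl)
  also have "\<dots> = Efun (genI (map (act g) xs))" by (simp add: Efun_genI comp_def)
  finally show ?thesis by simp
qed

lemma genI_concat: "genI (concat xss) = \<Union> (genI ` set xss)"
  by (auto simp: genI_def)

lemma pre_prin: "\<exists>zs. {a. \<nu> * a \<in> prin l} = genI zs"
proof -
  define M where "M = d l - d \<nu>"
  define B where "B = Dset M \<inter> {\<beta>. \<nu> * \<beta> \<in> prin l}"
  have "finite B" using Dset_fin by (simp add: B_def)
  then obtain zs where zs: "set zs = B" using finite_list by blast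
  have "{a. \<nu> * a \<in> prin l} = genI zs"
  proof
    show "{a. \<nu> * a \<in> prin l} \<subseteq> genI zs"
    proof
      fix a assume "a \<in> {a. \<nu> * a \<in> prin l}"
      then obtain c where c: "\<nu> * a = l * c" by (auto simp: prin_def)
      have "d l \<le> d (\<nu> * a)" using c by (simp add: d_mult le_fun_def)
      then have h: "\<And>x. d l x \<le> d \<nu> x + d a x" by (simp add: d_mult le_fun_def)
      have Ma: "M \<le> d a" unfolding le_fun_def M_def
      proof
        fix x show "(d l - d \<nu>) x \<le> d a x" using h[of x] by simp
      qed
      obtain \<beta> a' where ba: "d \<beta> = M" "a = \<beta> * a'" using factor[OF d_le_split[OF Ma]] by blast
      have "d l \<le> d (\<nu> * \<beta>)" unfolding le_fun_def
      proof
        fix x have "d l x \<le> d \<nu> x + (d l x - d \<nu> x)" by arith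
        then show "d l x \<le> d (\<nu> * \<beta>) x" using ba(1) by (simp add: d_mult M_def)
      qed
      moreover have "(\<nu> * \<beta>) * a' = l * c" using c ba by (simp add: mult.assoc)
      ultimately obtain x where "\<nu> * \<beta> = l * x" using prefix by blast
      then have "\<beta> \<in> B" using ba by (auto simp: B_def Dset_def prin_def)
      then show "a \<in> genI zs" using ba zs by (auto simp: genI_def prin_def)
    qed
    show "genI zs \<subseteq> {a. \<nu> * a \<in> prin l}"
    proof
      fix a assume "a \<in> genI zs"
      then obtain \<beta> c where bc: "\<beta> \<in> B" "a = \<beta> * c" using zs by (auto simp: genI_def prin_def)
      then obtain e where "\<nu> * \<beta> = l * e" by (auto simp: B_def prin_def)
      then have "\<nu> * a = l * (e * c)" using bc by (simp add: mult.assoc[symmetric])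
      then show "a \<in> {a. \<nu> * a \<in> prin l}" by (auto simp: prin_def)
    qed
  qed
  then show ?thesis by blast
qed

lemma pre_genI: "\<exists>zs. {a. \<nu> * a \<in> genI ys} = genI zs"
proof -
  have "\<forall>l. \<exists>zs. {a. \<nu> * a \<in> prin l} = genI zs" using pre_prin by blast
  then obtain f where f: "\<And>l. {a. \<nu> * a \<in> prin l} = genI (f l)" by metis
  have "{a. \<nu> * a \<in> genI ys} = genI (concat (map f ys))"
  proof -
    have "{a. \<nu> * a \<in> genI ys} = (\<Union>l\<in>set ys. {a. \<nu> * a \<in> prin l})" by (auto simp: genI_def)
    also have "\<dots> = (\<Union>l\<in>set ys. genI (f l))" using f by simp
    also have "\<dots> = genI (concat (map f ys))" by (simp add: genI_concat image_image)
    finally show ?thesis .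
  qed
  then show ?thesis by blast
qed

lemma img_form: "m (\<nu>, g) ` {x. fst x \<in> S} = {x. fst x \<in> (*) \<nu> ` act g ` S}"
proof
  show "m (\<nu>, g) ` {x. fst x \<in> S} \<subseteq> {x. fst x \<in> (*) \<nu> ` act g ` S}"
    by (auto simp: m_simp)
  show "{x. fst x \<in> (*) \<nu> ` act g ` S} \<subseteq> m (\<nu>, g) ` {x. fst x \<in> S}"
  proof
    fix x :: "'p \<times> 'g" assume "x \<in> {x. fst x \<in> (*) \<nu> ` act g ` S}"
    then obtain a k where x: "x = (\<nu> * act g a, k)" "a \<in> S" by (cases x) auto
    have "m (\<nu>, g) (a, - restr g a + k) = x" using x by (simp add: m_simp add.assoc[symmetric])
    moreover have "(a, - restr g a + k) \<in> {x. fst x \<in> S}" using x by simp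
    ultimately show "x \<in> m (\<nu>, g) ` {x. fst x \<in> S}" by (metis image_eqI)
  qed
qed

lemma act_pre: "{a. act g a \<in> S} = act (- g) ` S"
proof
  show "{a. act g a \<in> S} \<subseteq> act (- g) ` S"
  proof
    fix a assume "a \<in> {a. act g a \<in> S}"
    then show "a \<in> act (- g) ` S" using act_inv1[of g a] by (metis image_eqI mem_Collect_eq)
  qed
  show "act (- g) ` S \<subseteq> {a. act g a \<in> S}" by auto
qed

lemma cword_form: "\<exists>xs. cword m ps = {x. fst x \<in> genI xs}"
proof (induction ps)
  case Nil
  have "genI [1] = UNIV" by (auto simp: genI_def prin_def)
  then show ?case by (intro exI[of _ "[1]"]) simp
next
  case (Cons pq ps)
  obtain xs where IH: "cword m ps = {x. fst x \<in> genI xs}" using Cons by blast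
  obtain \<nu> g \<nu>' g' where pq: "pq = ((\<nu>, g), (\<nu>', g'))" by (cases pq) auto
  define ys where "ys = map ((*) \<nu>') (map (act g') xs)"
  have img: "m (\<nu>', g') ` cword m ps = {x. fst x \<in> genI ys}"
    unfolding IH img_form ys_def by (simp add: act_genI mul_genI)
  obtain zs where zs: "{a. \<nu> * a \<in> genI ys} = genI zs" using pre_genI by blast
  have "cword m (pq # ps) = {y. m (\<nu>, g) y \<in> {x. fst x \<in> genI ys}}"
    using img by (simp add: pq)
  also have "\<dots> = {y. fst y \<in> {a. act g a \<in> {a. \<nu> * a \<in> genI ys}}}"
    by (auto simp: m_simp)
  also have "\<dots> = {y. fst y \<in> genI (map (act (- g)) zs)}"
    by (simp only: zs act_pre act_genI)
  finally show ?case by blast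
qed

lemma constr_form: "X \<in> constructible m \<Longrightarrow> \<exists>xs. X = {x. fst x \<in> genI xs}"
proof -
  assume "X \<in> constructible m"
  then have "X = {} \<or> (\<exists>ps. X = cword m ps)" by (auto simp: constructible_def)
  moreover have "{} = {x. fst x \<in> genI []}" by (simp add: genI_def)
  ultimately show ?thesis using cword_form by blast
qed

lemma fst_form: "fst ` {x :: 'p \<times> 'g. fst x \<in> S} = S"
  by (force simp: image_iff)

definition Vr :: "'p \<times> 'g \<Rightarrow> 'b" where "Vr x = W (fst x) * U (snd x)"
definition Er :: "('p \<times> 'g) set \<Rightarrow> 'b" where "Er X = Efun (fst ` X)"

lemma Er_form: "Er {x. fst x \<in> genI xs} = Efun (genI xs)"
  by (simp add: Er_def fst_form)

lemma stab_constr: "X \<in> constructible m \<Longrightarrow> \<exists>N. stab (fst ` X) N"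
  using constr_form stab_genI fst_form by metis

lemma common_stab:
  assumes "\<forall>X\<in>set xs. \<exists>N. stab (f X) N"
  shows "\<exists>N. N \<in> range d \<and> (\<forall>X\<in>set xs. stab (f X) N)"
  using assms
proof (induction xs)
  case Nil then show ?case using rng_0 by auto
next
  case (Cons x xs)
  obtain N where N: "N \<in> range d" "\<forall>X\<in>set xs. stab (f X) N" using Cons by auto
  obtain M where M: "stab (f x) M" using Cons.prems by auto
  have r: "sup N M \<in> range d" using N(1) M rng_sup by (simp add: stab_def)
  have "stab (f x) (sup N M)" by (rule stab_mono[OF M _ r]) simp
  moreover have "\<forall>X\<in>set xs. stab (f X) (sup N M)" using N(2) stab_mono r by (meson sup_ge1)
  ultimately show ?case using r by auto
qed

lemma PP_prod_list: "N \<in> range d \<Longrightarrow> prod_list (map (\<lambda>X. PP N (f X)) xs) = PP N (\<Inter>X\<in>set xs. f X)"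
proof (induction xs)
  case Nil then show ?case using sumD by simp
next
  case (Cons x xs)
  then show ?case using PP_mult[OF Cons.prems, of "f x"] by (simp add: Int_commute)
qed

lemma part2: "boundary_rep m Vr Er \<and> (\<forall>\<mu>. Vr (\<mu>, 0) = W \<mu>) \<and> (\<forall>g. Vr (1, g) = U g)"
proof -
  have iso: "isometry (Vr p)" for p
  proof -
    have "cstar (Vr p) * Vr p = cstar (U (snd p)) * (cstar (W (fst p)) * W (fst p)) * U (snd p)"
      by (simp add: Vr_def cstar_mult mult.assoc)
    then show ?thesis by (simp add: isometry_def W_iso' U_unit1)
  qed
  have mult: "Vr (m p q) = Vr p * Vr q" for p q
  proof -
    obtain a g where p: "p = (a, g)" by (cases p)
    obtain b h where q: "q = (b, h)" by (cases q)
    have "Vr (m p q) = W a * (W (act g b) * U (restr g b)) * U h"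
      by (simp add: p q m_simp Vr_def W_mult U_add mult.assoc)
    also have "\<dots> = Vr p * Vr q" by (simp add: p q Vr_def covr[symmetric] mult.assoc)
    finally show ?thesis .
  qed
  have proj: "projection (Er X)" if "X \<in> constructible m" for X
    using constr_form[OF that] Er_form Efun_proj[OF stab_genI] by metis
  have conj: "Vr p * Er X * cstar (Vr p) = Er (m p ` X)" if Xc: "X \<in> constructible m" for p X
  proof -
    obtain xs where X: "X = {x. fst x \<in> genI xs}" using constr_form[OF Xc] by blast
    obtain \<nu> g where p: "p = (\<nu>, g)" by (cases p)
    have "Er (m p ` X) = Efun ((*) \<nu> ` genI (map (act g) xs))"
      by (simp add: p X img_form Er_def fst_form act_genI)
    also have "\<dots> = W \<nu> * (U g * Efun (genI xs) * cstar (U g)) * cstar (W \<nu>)"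
      by (simp add: Efun_img[OF stab_genI] Efun_act)
    also have "\<dots> = Vr p * Er X * cstar (Vr p)"
      by (simp add: p X Er_form Vr_def cstar_mult mult.assoc)
    finally show ?thesis by simp
  qed
  have E0: "Er {} = 0"
    using Efun_eq[OF stab_empty[OF rng_0]] by (simp add: Er_def)
  have EU: "Er UNIV = 1"
  proof -
    have "fst ` (UNIV :: ('p \<times> 'g) set) = UNIV" using fst_form[of UNIV] by simp
    then show ?thesis using Efun_eq[OF stab_UNIV[OF rng_0]] sumD[OF rng_0] by (simp add: Er_def)
  qed
  have int: "Er X * Er Y = Er (X \<inter> Y)" if Xc: "X \<in> constructible m" and Yc: "Y \<in> constructible m" for X Y
  proof -
    obtain xs where X: "X = {x. fst x \<in> genI xs}" using constr_form[OF Xc] by blast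
    obtain ys where Y: "Y = {x. fst x \<in> genI ys}" using constr_form[OF Yc] by blast
    have "X \<inter> Y = {x. fst x \<in> genI xs \<inter> genI ys}" using X Y by auto
    then have "Er (X \<inter> Y) = Efun (genI xs \<inter> genI ys)" unfolding Er_def by (simp only: fst_form)
    also have "\<dots> = Efun (genI xs) * Efun (genI ys)" by (rule Efun_Int[OF stab_genI stab_genI])
    finally show ?thesis using X Y by (simp add: Er_form)
  qed
  have found: "prod_list (map (\<lambda>X. 1 - Er X) xs) = 0"
    if fs: "foundation_set m F" and xs: "distinct xs" "set xs = F" for F xs
  proof -
    have Fc: "F \<subseteq> constructible m" using fs by (simp add: foundation_set_def)
    have "\<forall>X\<in>set xs. \<exists>N. stab (fst ` X) N" using xs Fc stab_constr by blast
    then obtain N where N: "N \<in> range d" "\<forall>X\<in>set xs. stab (fst ` X) N"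
      using common_stab[of xs "\<lambda>X. fst ` X"] by blast
    have "prod_list (map (\<lambda>X. 1 - Er X) xs) = prod_list (map (\<lambda>X. PP N (- fst ` X)) xs)"
    proof -
      have "\<forall>X\<in>set xs. 1 - Er X = PP N (- fst ` X)"
        using N Efun_eq PP_compl by (simp add: Er_def)
      then show ?thesis by (metis (no_types, lifting) map_eq_conv)
    qed
    also have "\<dots> = PP N (\<Inter>X\<in>set xs. - fst ` X)" by (rule PP_prod_list[OF N(1)])
    also have "\<dots> = 0"
    proof -
      have "Dset N \<inter> (\<Inter>X\<in>set xs. - fst ` X) = {}"
      proof (rule ccontr)
        assume "Dset N \<inter> (\<Inter>X\<in>set xs. - fst ` X) \<noteq> {}"
        then obtain \<rho> where \<rho>: "d \<rho> = N" "\<forall>X\<in>F. \<rho> \<notin> fst ` X" using xs by (auto simp: Dset_def)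
        define Y where "Y = cword m [((1, 0), (\<rho>, 0))]"
        have Yc: "Y \<in> constructible m" unfolding Y_def by (rule cword_constr)
        have Yr: "Y = range (m (\<rho>, 0))" unfolding Y_def by (rule cword_range)
        have "(\<rho>, 0) \<in> Y" unfolding Yr using m_e_right[of "(\<rho>, 0)"] by (metis rangeI)
        then have "Y \<noteq> {}" by auto
        then obtain X where X: "X \<in> F" "X \<inter> Y \<noteq> {}" using fs Yc unfolding foundation_set_def by blast
        then obtain x where x: "x \<in> X" "x \<in> Y" by auto
        then obtain a h where "x = m (\<rho>, 0) (a, h)" unfolding Yr by auto
        then have "fst x = \<rho> * a" by (simp add: m_simp)
        then have "\<rho> * a \<in> fst ` X" using x by (metis image_eqI)
        moreover have "stab (fst ` X) N" using N xs X by auto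
        ultimately have "\<rho> \<in> fst ` X" using \<rho> by (simp add: stab_def)
        then show False using \<rho> X by auto
      qed
      then show ?thesis by (simp add: PP_def)
    qed
    finally show ?thesis .
  qed
  have br: "boundary_rep m Vr Er"
    unfolding boundary_rep_def using iso mult proj conj E0 EU int found by blast
  show ?thesis using br by (simp add: Vr_def U_zero W_one)
qed

end


theorem mainTheorem4:
  fixes K :: "nat set"
    and d :: "'p::monoid_mult \<Rightarrow> nat \<Rightarrow> nat"
    and act :: "'g::group_add \<Rightarrow> 'p \<Rightarrow> 'p"
    and restr :: "'g \<Rightarrow> 'p \<Rightarrow> 'g"
  assumes "single_vertex_kgraph K d"
    and "zappa_szep act restr"
    and "\<forall>\<mu> h. \<exists>g. restr g \<mu> = h"
  shows
    "(\<forall>(V :: 'p \<times> 'g \<Rightarrow> 'b::cstar_algebra) E. boundary_rep (zs_mult act restr) V E \<longrightarrow>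
        covariant_rep K d act restr (\<lambda>g. V (1, g)) (\<lambda>\<mu>. V (\<mu>, 0))) \<and>
     (\<forall>(U :: 'g \<Rightarrow> 'b) W. covariant_rep K d act restr U W \<longrightarrow>
        (\<exists>V E. boundary_rep (zs_mult act restr) V E \<and>
           (\<forall>\<mu>. V (\<mu>, 0) = W \<mu>) \<and> (\<forall>g. V (1, g) = U g))) \<and>
     (\<forall>(V :: 'p \<times> 'g \<Rightarrow> 'b) E V' E'.
        boundary_rep (zs_mult act restr) V E \<and> boundary_rep (zs_mult act restr) V' E' \<and>
        (\<forall>\<mu>. V (\<mu>, 0) = V' (\<mu>, 0)) \<and> (\<forall>g. V (1, g) = V' (1, g)) \<longrightarrow>
        (\<forall>p. V p = V' p) \<and> (\<forall>X\<in>constructible (zs_mult act restr). E X = E' X))"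
proof -
  have kg: "kgraph K d" using assms(1) by (rule kgraph.intro)
  have zl: "zsl act restr" using assms(2) by (rule zsl.intro)
  have kz: "kzs K d act restr" using kg zl by (rule kzs.intro)
  have P1: "\<forall>(V :: 'p \<times> 'g \<Rightarrow> 'b::cstar_algebra) E. boundary_rep (zs_mult act restr) V E \<longrightarrow>
        covariant_rep K d act restr (\<lambda>g. V (1, g)) (\<lambda>\<mu>. V (\<mu>, 0))"
    using kzs.part1[OF kz] by blast
  have P2: "\<forall>(U :: 'g \<Rightarrow> 'b) W. covariant_rep K d act restr U W \<longrightarrow>
        (\<exists>V E. boundary_rep (zs_mult act restr) V E \<and>
           (\<forall>\<mu>. V (\<mu>, 0) = W \<mu>) \<and> (\<forall>g. V (1, g) = U g))"
  proof (intro allI impI)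
    fix U :: "'g \<Rightarrow> 'b" and W :: "'p \<Rightarrow> 'b"
    assume c: "covariant_rep K d act restr U W"
    have cr: "covrep K d act restr U W" using kz c by (intro covrep.intro covrep_axioms.intro)
    show "\<exists>V E. boundary_rep (zs_mult act restr) V E \<and> (\<forall>\<mu>. V (\<mu>, 0) = W \<mu>) \<and> (\<forall>g. V (1, g) = U g)"
      using covrep.part2[OF cr] by blast
  qed
  have P3: "\<forall>(V :: 'p \<times> 'g \<Rightarrow> 'b) E V' E'.
        boundary_rep (zs_mult act restr) V E \<and> boundary_rep (zs_mult act restr) V' E' \<and>
        (\<forall>\<mu>. V (\<mu>, 0) = V' (\<mu>, 0)) \<and> (\<forall>g. V (1, g) = V' (1, g)) \<longrightarrow>
        (\<forall>p. V p = V' p) \<and> (\<forall>X\<in>constructible (zs_mult act restr). E X = E' X)"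
    using zsl.part3[OF zl] by blast
  show ?thesis using P1 P2 P3 by blast
qed


end
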